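(* Let $A$ be a reversible $JW$-algebra with a faithful normal state $\rho$. Let $0<\varepsilon<1/16$ and let $D_m\in A^+$ ($m=1,2,\dots$) satisfy $\sum_{m=1}^\infty\rho(D_m)<\varepsilon$. Then there exists a projection $E\in A$ such that $\rho({\bf 1}-E)<2\varepsilon^{1/4}$ and $\left\|E\left(\sum_{k=1}^m D_k\right)E\right\|<4\varepsilon^{1/2}$ for all $m=1,2,\dots$.
   Context: A $JW$-algebra is a real linear space of self-adjoint operators in $B(H)$ ($H$ a complex Hilbert space), containing the identity ${\bf 1}$, closed under the Jordan product $a\circ b=\frac12(ab+ba)$ and closed in the weak operator topology; it is reversible if $a_1a_2\cdots a_n+a_na_{n-1}\cdots a_1\in A$ whenever $a_1,\dots,a_n\in A$. $A^+$ denotes the positive elements of $A$. *)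

theory Defs
  imports "HOL-Analysis.Analysis"
begin

text \<open>A complex Hilbert space is modelled as a real Hilbert space H (type class
real_inner + complete_space) together with a complex structure J (multiplication
by the imaginary unit): a bounded real-linear isometry with J o J = -1.
Complex scalar multiplication is (a + b i) x = a x + b J x, and the complex inner
product is determined by the real one (its real part). B(H), the complex-linear
bounded operators, are the bounded real-linear operators commuting with J.\<close>

definition complex_structure :: "('h::{real_inner,complete_space} \<Rightarrow>\<^sub>L 'h) \<Rightarrow> bool" where
  "complex_structure J \<longleftrightarrow> J o\<^sub>L J = - id_blinfun \<and> (\<forall>x y. inner (J x) (J y) = inner x y)"

definition BH :: "('h::{real_inner,complete_space} \<Rightarrow>\<^sub>L 'h) \<Rightarrow> ('h \<Rightarrow>\<^sub>L 'h) set" where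
  "BH J = {T. T o\<^sub>L J = J o\<^sub>L T}"

definition self_adj :: "('h::{real_inner,complete_space} \<Rightarrow>\<^sub>L 'h) \<Rightarrow> ('h \<Rightarrow>\<^sub>L 'h) \<Rightarrow> bool" where
  "self_adj J T \<longleftrightarrow> T \<in> BH J \<and> (\<forall>x y. inner (T x) y = inner x (T y))"

definition positive_op :: "('h::{real_inner,complete_space} \<Rightarrow>\<^sub>L 'h) \<Rightarrow> ('h \<Rightarrow>\<^sub>L 'h) \<Rightarrow> bool" where
  "positive_op J T \<longleftrightarrow> self_adj J T \<and> (\<forall>x. 0 \<le> inner (blinfun_apply T x) x)"

definition op_le :: "('h::{real_inner,complete_space} \<Rightarrow>\<^sub>L 'h) \<Rightarrow> ('h \<Rightarrow>\<^sub>L 'h) \<Rightarrow> ('h \<Rightarrow>\<^sub>L 'h) \<Rightarrow> bool" where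
  "op_le J S T \<longleftrightarrow> self_adj J S \<and> self_adj J T \<and> positive_op J (T - S)"

definition jordan_prod :: "('h::real_normed_vector \<Rightarrow>\<^sub>L 'h) \<Rightarrow> ('h \<Rightarrow>\<^sub>L 'h) \<Rightarrow> ('h \<Rightarrow>\<^sub>L 'h)" where
  "jordan_prod a b = (1/2) *\<^sub>R (a o\<^sub>L b + b o\<^sub>L a)"

text \<open>Closedness in the weak operator topology: T (in B(H)) lies in the WOT-closure of A iff
for all finitely many vectors x_i, y_i and e > 0 some a in A has |<(T - a) x_i, y_i>| < e;
since the complex inner product is <u,v> + i <u, J v> (real parts), it suffices to use the
real inner product.\<close>
definition wot_closed :: "('h::{real_inner,complete_space} \<Rightarrow>\<^sub>L 'h) \<Rightarrow> ('h \<Rightarrow>\<^sub>L 'h) set \<Rightarrow> bool" where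
  "wot_closed J A \<longleftrightarrow> (\<forall>T::'h \<Rightarrow>\<^sub>L 'h. T \<in> BH J \<longrightarrow>
     (\<forall>F e. finite F \<and> e > 0 \<longrightarrow> (\<exists>a\<in>A. \<forall>(x,y)\<in>F. \<bar>inner (blinfun_apply (T - a) x) y\<bar> < e)) \<longrightarrow> T \<in> A)"

definition JW_algebra :: "('h::{real_inner,complete_space} \<Rightarrow>\<^sub>L 'h) \<Rightarrow> ('h \<Rightarrow>\<^sub>L 'h) set \<Rightarrow> bool" where
  "JW_algebra J A \<longleftrightarrow> complex_structure J \<and>
     (\<forall>a\<in>A. self_adj J a) \<and> id_blinfun \<in> A \<and> 0 \<in> A \<and>
     (\<forall>a\<in>A. \<forall>b\<in>A. a + b \<in> A) \<and> (\<forall>c. \<forall>a\<in>A. c *\<^sub>R a \<in> A) \<and>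
     (\<forall>a\<in>A. \<forall>b\<in>A. jordan_prod a b \<in> A) \<and> wot_closed J A"

definition list_prod :: "('h::real_normed_vector \<Rightarrow>\<^sub>L 'h) list \<Rightarrow> ('h \<Rightarrow>\<^sub>L 'h)" where
  "list_prod as = foldr (\<lambda>a b. a o\<^sub>L b) as id_blinfun"

definition reversible :: "('h::real_normed_vector \<Rightarrow>\<^sub>L 'h) set \<Rightarrow> bool" where
  "reversible A \<longleftrightarrow> (\<forall>as. as \<noteq> [] \<and> set as \<subseteq> A \<longrightarrow> list_prod as + list_prod (rev as) \<in> A)"

definition pos_part :: "('h::{real_inner,complete_space} \<Rightarrow>\<^sub>L 'h) \<Rightarrow> ('h \<Rightarrow>\<^sub>L 'h) set \<Rightarrow> ('h \<Rightarrow>\<^sub>L 'h) set" where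
  "pos_part J A = {a\<in>A. positive_op J a}"

definition is_state :: "('h::{real_inner,complete_space} \<Rightarrow>\<^sub>L 'h) \<Rightarrow> ('h \<Rightarrow>\<^sub>L 'h) set \<Rightarrow> (('h \<Rightarrow>\<^sub>L 'h) \<Rightarrow> real) \<Rightarrow> bool" where
  "is_state J A \<rho> \<longleftrightarrow> (\<forall>a\<in>A. \<forall>b\<in>A. \<rho> (a + b) = \<rho> a + \<rho> b) \<and> (\<forall>c. \<forall>a\<in>A. \<rho> (c *\<^sub>R a) = c * \<rho> a)
     \<and> (\<forall>a\<in>pos_part J A. 0 \<le> \<rho> a) \<and> \<rho> id_blinfun = 1"

definition faithful_state :: "('h::{real_inner,complete_space} \<Rightarrow>\<^sub>L 'h) \<Rightarrow> ('h \<Rightarrow>\<^sub>L 'h) set \<Rightarrow> (('h \<Rightarrow>\<^sub>L 'h) \<Rightarrow> real) \<Rightarrow> bool" where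
  "faithful_state J A \<rho> \<longleftrightarrow> (\<forall>a\<in>pos_part J A. \<rho> a = 0 \<longrightarrow> a = 0)"

text \<open>Normality: \<rho>(sup a_\<alpha>) = sup \<rho>(a_\<alpha>) for every bounded increasing net in A^+;
expressed via the (nonempty, upward directed, bounded) range S of the net and its least
upper bound s among self-adjoint operators.\<close>
definition normal_state :: "('h::{real_inner,complete_space} \<Rightarrow>\<^sub>L 'h) \<Rightarrow> ('h \<Rightarrow>\<^sub>L 'h) set \<Rightarrow> (('h \<Rightarrow>\<^sub>L 'h) \<Rightarrow> real) \<Rightarrow> bool" where
  "normal_state J A \<rho> \<longleftrightarrow> (\<forall>S s. S \<noteq> {} \<and> S \<subseteq> pos_part J A \<and>
      (\<forall>x\<in>S. \<forall>y\<in>S. \<exists>z\<in>S. op_le J x z \<and> op_le J y z) \<and>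
      (\<forall>x\<in>S. op_le J x s) \<and> (\<forall>t. self_adj J t \<and> (\<forall>x\<in>S. op_le J x t) \<longrightarrow> op_le J s t)
      \<longrightarrow> \<rho> s = Sup (\<rho> ` S))"

definition is_projection :: "('h::real_normed_vector \<Rightarrow>\<^sub>L 'h) \<Rightarrow> bool" where
  "is_projection E \<longleftrightarrow> E o\<^sub>L E = E"

end

theory Submission
  imports Defs
begin

lemmas bl[simp] = plus_blinfun.rep_eq minus_blinfun.rep_eq scaleR_blinfun.rep_eq uminus_blinfun.rep_eq
  zero_blinfun.rep_eq blinfun.add_right blinfun.diff_right blinfun.scaleR_right blinfun.minus_right blinfun.zero_right

lemma cmp_assoc: "(a o\<^sub>L b) o\<^sub>L c = a o\<^sub>L (b o\<^sub>L c)" by (rule blinfun_eqI) simp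
lemma cmp_add_l: "(a + b) o\<^sub>L c = (a o\<^sub>L c) + (b o\<^sub>L c)" by (rule blinfun_eqI) simp
lemma cmp_add_r: "c o\<^sub>L (a + b) = (c o\<^sub>L a) + (c o\<^sub>L b)" by (rule blinfun_eqI) simp
lemma cmp_diff_l: "(a - b) o\<^sub>L c = (a o\<^sub>L c) - (b o\<^sub>L c)" by (rule blinfun_eqI) simp
lemma cmp_diff_r: "c o\<^sub>L (a - b) = (c o\<^sub>L a) - (c o\<^sub>L b)" by (rule blinfun_eqI) simp
lemma cmp_scale_l: "(r *\<^sub>R a) o\<^sub>L c = r *\<^sub>R (a o\<^sub>L c)" by (rule blinfun_eqI) simp
lemma cmp_scale_r: "c o\<^sub>L (r *\<^sub>R a) = r *\<^sub>R (c o\<^sub>L a)" by (rule blinfun_eqI) simp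
lemma cmp_id_l[simp]: "id_blinfun o\<^sub>L a = a" by (rule blinfun_eqI) simp
lemma cmp_id_r[simp]: "a o\<^sub>L id_blinfun = a" by (rule blinfun_eqI) simp
lemma cmp_zero_l[simp]: "0 o\<^sub>L a = 0" by (rule blinfun_eqI) simp
lemmas cmp_simps = cmp_add_l cmp_add_r cmp_diff_l cmp_diff_r cmp_scale_l cmp_scale_r

definition symop :: "('h::real_inner \<Rightarrow>\<^sub>L 'h) \<Rightarrow> bool" where
  "symop T \<longleftrightarrow> (\<forall>x y. inner (T x) y = inner x (T y))"
definition posop :: "('h::real_inner \<Rightarrow>\<^sub>L 'h) \<Rightarrow> bool" where
  "posop T \<longleftrightarrow> symop T \<and> (\<forall>x. 0 \<le> inner (T x) x)"
definition ople :: "('h::real_inner \<Rightarrow>\<^sub>L 'h) \<Rightarrow> ('h \<Rightarrow>\<^sub>L 'h) \<Rightarrow> bool" where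
  "ople S T \<longleftrightarrow> symop S \<and> symop T \<and> (\<forall>x. inner (S x) x \<le> inner (T x) x)"
definition comm :: "('h::real_normed_vector \<Rightarrow>\<^sub>L 'h) \<Rightarrow> ('h \<Rightarrow>\<^sub>L 'h) \<Rightarrow> bool" where
  "comm a b \<longleftrightarrow> a o\<^sub>L b = b o\<^sub>L a"

lemma symopD: "symop T \<Longrightarrow> inner (T x) y = inner x (T y)" by (simp add: symop_def)
lemma symop_add: "symop a \<Longrightarrow> symop b \<Longrightarrow> symop (a + b)" by (simp add: symop_def inner_add_left inner_add_right)
lemma symop_diff: "symop a \<Longrightarrow> symop b \<Longrightarrow> symop (a - b)" by (simp add: symop_def inner_diff_left inner_diff_right)
lemma symop_scale: "symop a \<Longrightarrow> symop (r *\<^sub>R a)" by (simp add: symop_def)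
lemma symop_id: "symop id_blinfun" by (simp add: symop_def)
lemma symop_zero: "symop 0" by (simp add: symop_def)
lemma symop_cmp: "symop a \<Longrightarrow> symop b \<Longrightarrow> comm a b \<Longrightarrow> symop (a o\<^sub>L b)"
  unfolding symop_def comm_def by (metis blinfun_apply_blinfun_compose)
lemma symop_conj: "symop a \<Longrightarrow> symop b \<Longrightarrow> symop (a o\<^sub>L b o\<^sub>L a)"
  unfolding symop_def by simp
lemma posop_conj: assumes "symop a" "posop b" shows "posop (a o\<^sub>L b o\<^sub>L a)"
  unfolding posop_def
proof (intro conjI allI)
  show "symop (a o\<^sub>L b o\<^sub>L a)" using assms symop_conj unfolding posop_def by blast
  fix x
  have "inner ((a o\<^sub>L b o\<^sub>L a) x) x = inner (b (a x)) (a x)" using symopD[OF assms(1)] by simp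
  then show "0 \<le> inner ((a o\<^sub>L b o\<^sub>L a) x) x" using assms(2) unfolding posop_def by simp
qed
lemma posop_id: "posop id_blinfun" by (simp add: posop_def symop_id)
lemma posop_sq: "symop a \<Longrightarrow> posop (a o\<^sub>L a)"
  using posop_conj[OF _ posop_id, of a] by simp
lemma ople_posop: "ople S T \<longleftrightarrow> symop S \<and> symop T \<and> posop (T - S)"
  unfolding ople_def posop_def using symop_diff by (auto simp: inner_diff_left)
lemma posop_add: "posop a \<Longrightarrow> posop b \<Longrightarrow> posop (a + b)"
  unfolding posop_def by (auto intro: symop_add simp: inner_add_left)
lemma posop_scale: "posop a \<Longrightarrow> 0 \<le> r \<Longrightarrow> posop (r *\<^sub>R a)"
  unfolding posop_def by (auto intro: symop_scale)
lemma posopD: "posop a \<Longrightarrow> 0 \<le> inner (a x) x" by (simp add: posop_def)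
lemma posop_symop: "posop a \<Longrightarrow> symop a" by (simp add: posop_def)
lemma ople_trans: "ople a b \<Longrightarrow> ople b c \<Longrightarrow> ople a c"
  unfolding ople_def by (meson order_trans)
lemma ople_refl: "symop a \<Longrightarrow> ople a a" unfolding ople_def by simp

lemma inner_le_norm: fixes T :: "'a::real_inner \<Rightarrow>\<^sub>L 'a" shows "inner (T x) x \<le> norm T * (norm x)^2"
proof -
  have "inner (T x) x \<le> norm (T x) * norm x" using norm_cauchy_schwarz by blast
  also have "\<dots> \<le> norm T * norm x * norm x" by (simp add: mult_right_mono norm_blinfun)
  finally show ?thesis by (simp add: power2_eq_square mult.assoc)
qed

lemma quad_disc:
  fixes a b c :: real
  assumes "\<And>t. 0 \<le> a + 2*t*b + t^2*c" and "0 \<le> c"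
  shows "b^2 \<le> a*c"
proof (cases "c = 0")
  case True
  then have h: "\<And>t. 0 \<le> a + 2*t*b" using assms by simp
  have "b = 0"
  proof (rule ccontr)
    assume "b \<noteq> 0"
    have "0 \<le> a + 2*(-(abs a + 1)/(2*b))*b" using h by blast
    also have "\<dots> = a - (abs a + 1)" using \<open>b \<noteq> 0\<close> by (simp add: field_simps)
    finally show False by linarith
  qed
  then show ?thesis using True by simp
next
  case False
  then have "c > 0" using assms by simp
  have "0 \<le> a + 2*(-b/c)*b + (-b/c)^2*c" using assms by blast
  also have "\<dots> = a - b^2/c" using \<open>c>0\<close> by (simp add: field_simps power2_eq_square)
  finally have "b^2/c \<le> a" by simp
  then show ?thesis using \<open>c>0\<close> by (simp add: divide_le_eq mult.commute)
qed

lemma posop_cs: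
  assumes "posop D"
  shows "(inner (D x) y)^2 \<le> inner (D x) x * inner (D y) y"
proof -
  have s: "\<And>u v. inner (D u) v = inner (D v) u" using assms unfolding posop_def symop_def by (metis inner_commute)
  have "\<And>t. 0 \<le> inner (D x) x + 2*t*inner (D x) y + t^2 * inner (D y) y"
  proof -
    fix t
    have "0 \<le> inner (D (x + t *\<^sub>R y)) (x + t *\<^sub>R y)" using assms unfolding posop_def by blast
    also have "\<dots> = inner (D x) x + 2*t*inner (D x) y + t^2 * inner (D y) y"
      by (simp add: inner_add_left inner_add_right s[of y x] power2_eq_square algebra_simps)
    finally show "0 \<le> inner (D x) x + 2*t*inner (D x) y + t^2 * inner (D y) y" .
  qed
  then show ?thesis using quad_disc[of "inner (D x) x" "inner (D x) y" "inner (D y) y"] assms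
    unfolding posop_def by blast
qed

lemma posop_normsq:
  assumes "posop D"
  shows "(norm (D x))^2 \<le> norm D * inner (D x) x"
proof -
  have "(inner (D x) (D x))^2 \<le> inner (D x) x * inner (D (D x)) (D x)" by (rule posop_cs[OF assms])
  also have "\<dots> \<le> inner (D x) x * (norm D * (norm (D x))^2)"
    using assms inner_le_norm[where T=D and x="D x"] unfolding posop_def by (simp add: mult_left_mono)
  finally have h: "(norm (D x))^2 * (norm (D x))^2 \<le> (norm D * inner (D x) x) * (norm (D x))^2"
    by (simp add: power2_norm_eq_inner[symmetric] power2_eq_square algebra_simps)
  show ?thesis
  proof (cases "norm (D x) = 0")
    case True then show ?thesis using assms unfolding posop_def by simp
  next
    case False then show ?thesis using mult_right_le_imp_le[OF h] by simp
  qed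
qed

lemma posop_norm_le:
  assumes "posop D" "0 \<le> c" "\<And>x. inner (D x) x \<le> c * (norm x)^2"
  shows "norm D \<le> c"
proof (rule norm_blinfun_bound[OF assms(2)])
  fix x
  have "(inner (D x) (D x))^2 \<le> inner (D x) x * inner (D (D x)) (D x)" by (rule posop_cs[OF assms(1)])
  also have "\<dots> \<le> (c * (norm x)^2) * (c * (norm (D x))^2)"
    by (rule mult_mono'[OF assms(3)[of x] assms(3)[of "D x"] posopD[OF assms(1), of x] posopD[OF assms(1), of "D x"]])
  finally have h: "(norm (D x))^2 * (norm (D x))^2 \<le> (c * norm x)^2 * (norm (D x))^2"
    by (simp add: power2_norm_eq_inner[symmetric] power2_eq_square algebra_simps)
  have "(norm (D x))^2 \<le> (c * norm x)^2"
  proof (cases "norm (D x) = 0")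
    case True then show ?thesis by simp
  next
    case False then show ?thesis using mult_right_le_imp_le[OF h] by simp
  qed
  then show "norm (D x) \<le> c * norm x" using assms(2) by (meson power2_le_imp_le mult_nonneg_nonneg norm_ge_zero)
qed


fun pw :: "('a::real_normed_vector \<Rightarrow>\<^sub>L 'a) \<Rightarrow> nat \<Rightarrow> ('a \<Rightarrow>\<^sub>L 'a)" where
  "pw T 0 = id_blinfun" | "pw T (Suc n) = T o\<^sub>L pw T n"

lemma pw_add: "pw T (m + n) = pw T m o\<^sub>L pw T n"
  by (induction m) (simp_all add: cmp_assoc)

lemma pw_one[simp]: "pw T (Suc 0) = T" by simp

lemma comm_sym: "comm a b \<Longrightarrow> comm b a" by (simp add: comm_def)
lemma comm_refl: "comm a a" by (simp add: comm_def)
lemma comm_id: "comm a id_blinfun" by (simp add: comm_def)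
lemma comm_add: "comm K a \<Longrightarrow> comm K b \<Longrightarrow> comm K (a + b)" by (simp add: comm_def cmp_simps)
lemma comm_diff: "comm K a \<Longrightarrow> comm K b \<Longrightarrow> comm K (a - b)" by (simp add: comm_def cmp_simps)
lemma comm_scale: "comm K a \<Longrightarrow> comm K (r *\<^sub>R a)" by (simp add: comm_def cmp_simps)
lemma comm_cmp: "comm K a \<Longrightarrow> comm K b \<Longrightarrow> comm K (a o\<^sub>L b)"
  unfolding comm_def by (metis cmp_assoc)

lemma comm_pw: "comm K T \<Longrightarrow> comm K (pw T n)"
  by (induction n) (simp_all add: comm_id comm_cmp)

lemma symop_pw: "symop T \<Longrightarrow> symop (pw T n)"
  by (induction n) (simp_all add: symop_id symop_cmp comm_pw comm_refl)

lemma pw_conj: "pw T (Suc (k + k)) = pw T k o\<^sub>L T o\<^sub>L pw T k"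
proof -
  have "pw T (Suc (k + k)) = pw T (k + Suc k)" by simp
  also have "\<dots> = pw T k o\<^sub>L (T o\<^sub>L pw T k)" by (simp only: pw_add pw.simps)
  finally show ?thesis by (simp add: cmp_assoc)
qed

lemma even_odd_cases: obtains k where "n = k + k" | k where "n = Suc (k + k)"
proof -
  have "n = n div 2 + n div 2 \<or> n = Suc (n div 2 + n div 2)" by presburger
  then show ?thesis using that by blast
qed

lemma posop_pw: assumes "posop T" shows "posop (pw T n)"
proof -
  have s: "symop T" using assms posop_def by blast
  show ?thesis
  proof (cases n rule: even_odd_cases)
    case (1 k)
    then show ?thesis using posop_sq[OF symop_pw[OF s, of k]] by (simp add: pw_add)
  next
    case (2 k)
    then have "pw T n = pw T k o\<^sub>L T o\<^sub>L pw T k" by (simp only: pw_conj)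
    then show ?thesis using posop_conj[OF symop_pw[OF s, of k] assms] by simp
  qed
qed

lemma norm_pw: assumes "norm T \<le> r" shows "norm (pw T n) \<le> r ^ n"
proof (induction n)
  case 0 then show ?case by (simp add: norm_blinfun_id_le)
next
  case (Suc n)
  have "norm (pw T (Suc n)) \<le> norm T * norm (pw T n)" by (simp add: norm_blinfun_compose)
  also have "\<dots> \<le> r * r ^ n" using Suc assms by (simp add: mult_mono')
  finally show ?case by simp
qed

lemma posop_id_minus:
  assumes "posop W" "norm W \<le> 1" shows "posop (id_blinfun - W)"
  unfolding posop_def
proof (intro conjI allI)
  show "symop (id_blinfun - W)" by (rule symop_diff[OF symop_id posop_symop[OF assms(1)]])
  fix x
  have "inner (W x) x \<le> norm W * (norm x)^2" by (rule inner_le_norm)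
  also have "\<dots> \<le> (norm x)^2" using assms(2) by (simp add: mult_left_le_one_le)
  finally show "0 \<le> inner ((id_blinfun - W) x) x" by (simp add: inner_diff_left power2_norm_eq_inner)
qed

lemma posop_minus_sq:
  assumes "posop W" "norm W \<le> 1" shows "posop (W - (W o\<^sub>L W))"
  unfolding posop_def
proof (intro conjI allI)
  have s: "symop W" using assms posop_def by blast
  show "symop (W - (W o\<^sub>L W))" by (rule symop_diff[OF s symop_cmp[OF s s comm_refl]])
  fix x
  have "(norm (W x))^2 \<le> norm W * inner (W x) x" by (rule posop_normsq[OF assms(1)])
  also have "\<dots> \<le> inner (W x) x" using assms posopD[OF assms(1), of x] by (simp add: mult_left_le_one_le)
  finally have "(norm (W x))^2 \<le> inner (W x) x" .
  moreover have "inner ((W o\<^sub>L W) x) x = (norm (W x))^2"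
  proof -
    have "inner ((W o\<^sub>L W) x) x = inner (W (W x)) x" by (simp only: blinfun_apply_blinfun_compose)
    also have "\<dots> = inner (W x) (W x)" by (rule symopD[OF s])
    finally show ?thesis by (simp only: power2_norm_eq_inner)
  qed
  moreover have "inner ((W - (W o\<^sub>L W)) x) x = inner (W x) x - inner ((W o\<^sub>L W) x) x"
    by (simp only: minus_blinfun.rep_eq inner_diff_left)
  ultimately show "0 \<le> inner ((W - (W o\<^sub>L W)) x) x" by linarith
qed

lemma pw_decr:
  assumes "posop W" "norm W \<le> 1" shows "ople (pw W (Suc n)) (pw W n)"
proof -
  have s: "symop W" using assms posop_def by blast
  have "posop (pw W n - pw W (Suc n))"
  proof (cases n rule: even_odd_cases)
    case (1 k)
    have a1: "pw W n = pw W k o\<^sub>L id_blinfun o\<^sub>L pw W k" using 1 by (simp only: pw_add cmp_id_r)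
    have a2: "pw W (Suc n) = pw W k o\<^sub>L W o\<^sub>L pw W k" using 1 pw_conj by (simp only:)
    have a3: "pw W k o\<^sub>L (id_blinfun - W) o\<^sub>L pw W k = (pw W k o\<^sub>L id_blinfun o\<^sub>L pw W k) - (pw W k o\<^sub>L W o\<^sub>L pw W k)"
        by (simp only: cmp_diff_l cmp_diff_r)
    have eq: "pw W n - pw W (Suc n) = pw W k o\<^sub>L (id_blinfun - W) o\<^sub>L pw W k"
      unfolding a1 a2 a3 by (rule refl)
    show ?thesis unfolding eq by (rule posop_conj[OF symop_pw[OF s] posop_id_minus[OF assms]])
  next
    case (2 k)
    have ee: "pw W (Suc (Suc (k+k))) = pw W k o\<^sub>L (W o\<^sub>L W) o\<^sub>L pw W k"
    proof -
      have "pw W (Suc (Suc (k+k))) = pw W (k + Suc (Suc k))" by simp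
      also have "\<dots> = pw W k o\<^sub>L (W o\<^sub>L (W o\<^sub>L pw W k))" by (simp only: pw_add pw.simps)
      finally show ?thesis by (simp add: cmp_assoc)
    qed
    have eq: "pw W n - pw W (Suc n) = pw W k o\<^sub>L (W - (W o\<^sub>L W)) o\<^sub>L pw W k"
    proof -
      have a1: "pw W n = pw W k o\<^sub>L W o\<^sub>L pw W k" using 2 pw_conj by (simp only:)
      have a2: "pw W (Suc n) = pw W k o\<^sub>L (W o\<^sub>L W) o\<^sub>L pw W k" using 2 ee by (simp only:)
      have a3: "pw W k o\<^sub>L (W - (W o\<^sub>L W)) o\<^sub>L pw W k = (pw W k o\<^sub>L W o\<^sub>L pw W k) - (pw W k o\<^sub>L (W o\<^sub>L W) o\<^sub>L pw W k)"
        by (simp only: cmp_diff_l cmp_diff_r)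
      show ?thesis unfolding a1 a2 a3 by (rule refl)
    qed
    show ?thesis unfolding eq by (rule posop_conj[OF symop_pw[OF s] posop_minus_sq[OF assms]])
  qed
  then show ?thesis using ople_posop[of "pw W (Suc n)" "pw W n"] symop_pw[OF s, of n] symop_pw[OF s, of "Suc n"] by (simp only:) 
qed


lemma ople_mono_seq:
  assumes "\<And>n. ople (S n) (S (Suc n))" "\<And>n. symop (S n)" "m \<le> n"
  shows "ople (S m) (S n)"
  using assms(3)
proof (induction n rule: dec_induct)
  case base then show ?case using ople_refl assms(2) by blast
next
  case (step k) then show ?case using assms(1) ople_trans by blast
qed

lemma vigier:
  fixes S :: "nat \<Rightarrow> ('h::{real_inner,complete_space} \<Rightarrow>\<^sub>L 'h)"
  assumes sym: "\<And>n. symop (S n)" and inc: "\<And>n. ople (S n) (S (Suc n))" and bd: "\<And>n. norm (S n) \<le> M"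
  shows "\<exists>L. (\<forall>x. (\<lambda>n. blinfun_apply (S n) x) \<longlonglongrightarrow> blinfun_apply L x) \<and> norm L \<le> M \<and> symop L \<and> (\<forall>n. ople (S n) L)"
proof -
  have M0: "0 \<le> M" using bd[of 0] norm_ge_zero[of "S 0"] by linarith
  have mono: "\<And>m n. m \<le> n \<Longrightarrow> ople (S m) (S n)" using ople_mono_seq[of S, OF inc sym] by blast
  have conv: "convergent (\<lambda>n. S n x)" for x
  proof -
    define f where "f n = inner (S n x) x" for n
    have finc: "incseq f" unfolding incseq_def f_def using mono ople_def by blast
    have fbd: "f n \<le> M * (norm x)^2" for n
    proof -
      have "f n \<le> norm (S n) * (norm x)^2" unfolding f_def by (rule inner_le_norm)
      also have "\<dots> \<le> M * (norm x)^2" using bd[of n] by (simp add: mult_right_mono)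
      finally show ?thesis .
    qed
    have "convergent f" using LIMSEQ_incseq_SUP[OF _ finc] fbd unfolding convergent_def
      by (meson bdd_aboveI2)
    then have cf: "Cauchy f" using convergent_Cauchy by blast
    have key: "(norm (S n x - S m x))^2 \<le> (2*M+1) * \<bar>f n - f m\<bar>" if "m \<le> n" for m n
    proof -
      have p: "posop (S n - S m)" using mono[OF that] ople_posop by blast
      have "(norm ((S n - S m) x))^2 \<le> norm (S n - S m) * inner ((S n - S m) x) x"
        by (rule posop_normsq[OF p])
      also have "\<dots> \<le> (2*M+1) * inner ((S n - S m) x) x"
      proof (rule mult_right_mono)
        have "norm (S n - S m) \<le> norm (S n) + norm (S m)" by (rule norm_triangle_ineq4)
        also have "\<dots> \<le> 2*M+1" using bd[of n] bd[of m] by linarith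
        finally show "norm (S n - S m) \<le> 2*M+1" .
        show "0 \<le> inner ((S n - S m) x) x" using p posopD by blast
      qed
      also have "\<dots> \<le> (2*M+1) * \<bar>f n - f m\<bar>" using M0
        by (intro mult_left_mono) (auto simp: f_def inner_diff_left)
      finally show ?thesis by simp
    qed
    have "Cauchy (\<lambda>n. S n x)"
    proof (rule CauchyI)
      fix e :: real assume "0 < e"
      have "0 < e^2 / (2*M+1)" using \<open>0<e\<close> M0 by simp
      then obtain N where N: "\<And>m n. m \<ge> N \<Longrightarrow> n \<ge> N \<Longrightarrow> norm (f m - f n) < e^2/(2*M+1)"
        using CauchyD[OF cf] by blast
      have "norm (S m x - S n x) < e" if "m \<ge> N" "n \<ge> N" for m n
      proof -
        have a: "(norm (S m x - S n x))^2 < e^2"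
        proof (cases "m \<le> n")
          case True
          have "(norm (S m x - S n x))^2 = (norm (S n x - S m x))^2" by (simp add: norm_minus_commute)
          also have "\<dots> \<le> (2*M+1) * \<bar>f n - f m\<bar>" using key[OF True] .
          also have "\<dots> < (2*M+1) * (e^2/(2*M+1))" using N[OF that(2,1)] M0 by (intro mult_strict_left_mono) auto
          also have "\<dots> = e^2" using M0 by simp
          finally show ?thesis .
        next
          case False
          have "(norm (S m x - S n x))^2 \<le> (2*M+1) * \<bar>f m - f n\<bar>" using key False by simp
          also have "\<dots> < (2*M+1) * (e^2/(2*M+1))" using N[OF that(1,2)] M0 by (intro mult_strict_left_mono) auto
          also have "\<dots> = e^2" using M0 by simp
          finally show ?thesis .
        qed
        show ?thesis using power_less_imp_less_base[OF a] \<open>0<e\<close> by simp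
      qed
      then show "\<exists>M. \<forall>m\<ge>M. \<forall>n\<ge>M. norm (S m x - S n x) < e" by blast
    qed
    then show ?thesis using Cauchy_convergent by blast
  qed
  define l where "l x = lim (\<lambda>n. S n x)" for x
  have lim: "(\<lambda>n. S n x) \<longlonglongrightarrow> l x" for x using conv[of x] unfolding l_def by (simp add: convergent_LIMSEQ_iff)
  have ladd: "l (x + y) = l x + l y" for x y
  proof -
    have "(\<lambda>n. S n x + S n y) \<longlonglongrightarrow> l x + l y" using lim tendsto_add by blast
    moreover have "(\<lambda>n. S n x + S n y) \<longlonglongrightarrow> l (x + y)" using lim[of "x+y"] by (simp add: blinfun.add_right)
    ultimately show ?thesis using LIMSEQ_unique by blast
  qed
  have lscale: "l (r *\<^sub>R x) = r *\<^sub>R l x" for r x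
  proof -
    have "(\<lambda>n. r *\<^sub>R S n x) \<longlonglongrightarrow> r *\<^sub>R l x" using lim tendsto_scaleR tendsto_const by blast
    moreover have "(\<lambda>n. r *\<^sub>R S n x) \<longlonglongrightarrow> l (r *\<^sub>R x)" using lim[of "r *\<^sub>R x"] by simp
    ultimately show ?thesis using LIMSEQ_unique by blast
  qed
  have lbd: "norm (l x) \<le> norm x * M" for x
  proof -
    have "(\<lambda>n. norm (S n x)) \<longlonglongrightarrow> norm (l x)" using lim tendsto_norm by blast
    moreover have "norm (S n x) \<le> norm x * M" for n
    proof -
      have "norm (S n x) \<le> norm (S n) * norm x" by (rule norm_blinfun)
      also have "\<dots> \<le> M * norm x" using bd[of n] by (rule mult_right_mono) simp
      finally show ?thesis by (simp add: mult.commute)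
    qed
    ultimately show ?thesis using LIMSEQ_le_const2 by blast
  qed
  have bl: "bounded_linear l" by (rule bounded_linear_intro[OF ladd lscale lbd])
  define L where "L = Blinfun l"
  have Lapp: "blinfun_apply L = l" unfolding L_def using bl bounded_linear_Blinfun_apply by blast
  have "norm L \<le> M" using M0 lbd by (intro norm_blinfun_bound) (simp_all add: Lapp mult.commute)
  moreover have "symop L" unfolding symop_def
  proof (intro allI)
    fix x y
    have "(\<lambda>n. inner (S n x) y) \<longlonglongrightarrow> inner (L x) y" unfolding Lapp by (rule tendsto_inner[OF lim tendsto_const])
    moreover have "(\<lambda>n. inner x (S n y)) \<longlonglongrightarrow> inner x (L y)" unfolding Lapp by (rule tendsto_inner[OF tendsto_const lim])
    moreover have "inner (S n x) y = inner x (S n y)" for n using sym symopD by blast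
    ultimately show "inner (L x) y = inner x (L y)" using LIMSEQ_unique by simp
  qed
  moreover have "ople (S n) L" for n unfolding ople_def
  proof (intro conjI allI)
    show "symop (S n)" by (rule sym)
    show "symop L" by fact
    fix x
    have "(\<lambda>m. inner (S m x) x) \<longlonglongrightarrow> inner (L x) x" unfolding Lapp by (rule tendsto_inner[OF lim tendsto_const])
    moreover have "\<forall>m\<ge>n. inner (S n x) x \<le> inner (S m x) x" using mono ople_def by blast
    ultimately show "inner (S n x) x \<le> inner (L x) x" using LIMSEQ_le_const by blast
  qed
  ultimately show ?thesis using lim by (intro exI[of _ L]) (simp add: Lapp)
qed


lemma lim_comp:
  fixes a b :: "nat \<Rightarrow> ('h::real_normed_vector \<Rightarrow>\<^sub>L 'h)" and A B :: "'h \<Rightarrow>\<^sub>L 'h"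
  assumes la: "\<And>x. (\<lambda>n. a n x) \<longlonglongrightarrow> A x" and lb: "\<And>x. (\<lambda>n. b n x) \<longlonglongrightarrow> B x"
    and bd: "\<And>n. norm (a n) \<le> M"
  shows "(\<lambda>n. a n (b n x)) \<longlonglongrightarrow> A (B x)"
proof -
  have z: "(\<lambda>n. b n x - B x) \<longlonglongrightarrow> 0" using lb[of x] by (rule LIM_zero)
  have "(\<lambda>n. a n (b n x - B x)) \<longlonglongrightarrow> 0"
  proof (rule tendsto_0_le[OF z, of _ M])
    show "\<forall>\<^sub>F n in sequentially. norm (a n (b n x - B x)) \<le> norm (b n x - B x) * M"
    proof (rule always_eventually, rule allI)
      fix n
      have "norm (a n (b n x - B x)) \<le> norm (a n) * norm (b n x - B x)" by (rule norm_blinfun)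
      also have "\<dots> \<le> M * norm (b n x - B x)" using bd[of n] by (rule mult_right_mono) simp
      finally show "norm (a n (b n x - B x)) \<le> norm (b n x - B x) * M" by (simp add: mult.commute)
    qed
  qed
  then have "(\<lambda>n. a n (b n x - B x) + a n (B x)) \<longlonglongrightarrow> 0 + A (B x)" using la tendsto_add by blast
  then show ?thesis by (simp add: blinfun.diff_right)
qed

lemma comm_app: assumes "comm a b" shows "blinfun_apply a (blinfun_apply b x) = blinfun_apply b (blinfun_apply a x)"
proof -
  have "blinfun_apply (a o\<^sub>L b) x = blinfun_apply (b o\<^sub>L a) x" using assms unfolding comm_def by simp
  then show ?thesis by simp
qed

lemma comm_lim:
  fixes a :: "nat \<Rightarrow> ('h::real_normed_vector \<Rightarrow>\<^sub>L 'h)" and T K :: "'h \<Rightarrow>\<^sub>L 'h"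
  assumes la: "\<And>x. (\<lambda>n. a n x) \<longlonglongrightarrow> T x" and c: "\<And>n. comm K (a n)"
  shows "comm K T"
  unfolding comm_def
proof (rule blinfun_eqI)
  fix x
  have "(\<lambda>n. K (a n x)) \<longlonglongrightarrow> K (T x)" by (rule blinfun.tendsto[OF tendsto_const la])
  moreover have "K (a n x) = a n (K x)" for n using comm_app[OF c[of n]] .
  ultimately have "(\<lambda>n. a n (K x)) \<longlonglongrightarrow> K (T x)" by simp
  then show "(K o\<^sub>L T) x = (T o\<^sub>L K) x" using la[of "K x"] LIMSEQ_unique by simp
qed

lemma symop_lim:
  fixes a :: "nat \<Rightarrow> ('h::real_inner \<Rightarrow>\<^sub>L 'h)" and T :: "'h \<Rightarrow>\<^sub>L 'h"
  assumes la: "\<And>x. (\<lambda>n. a n x) \<longlonglongrightarrow> T x" and s: "\<And>n. symop (a n)"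
  shows "symop T"
  unfolding symop_def
proof (intro allI)
  fix x y
  have "(\<lambda>n. inner (a n x) y) \<longlonglongrightarrow> inner (T x) y" by (rule tendsto_inner[OF la tendsto_const])
  moreover have "(\<lambda>n. inner x (a n y)) \<longlonglongrightarrow> inner x (T y)" by (rule tendsto_inner[OF tendsto_const la])
  moreover have "inner (a n x) y = inner x (a n y)" for n using s symopD by blast
  ultimately show "inner (T x) y = inner x (T y)" using LIMSEQ_unique by simp
qed

locale jw =
  fixes J :: "'h::{real_inner,complete_space} \<Rightarrow>\<^sub>L 'h" and A :: "('h \<Rightarrow>\<^sub>L 'h) set"
  assumes JW: "JW_algebra J A"
begin

lemma A_sa: "a \<in> A \<Longrightarrow> self_adj J a" using JW unfolding JW_algebra_def by blast
lemma A_sym: "a \<in> A \<Longrightarrow> symop a" using A_sa unfolding self_adj_def symop_def by blast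
lemma A_BH: "a \<in> A \<Longrightarrow> a \<in> BH J" using A_sa unfolding self_adj_def by blast
lemma A_id: "id_blinfun \<in> A" using JW unfolding JW_algebra_def by blast
lemma A_zero: "0 \<in> A" using JW unfolding JW_algebra_def by blast
lemma A_add: "a \<in> A \<Longrightarrow> b \<in> A \<Longrightarrow> a + b \<in> A" using JW unfolding JW_algebra_def by blast
lemma A_scale: "a \<in> A \<Longrightarrow> c *\<^sub>R a \<in> A" using JW unfolding JW_algebra_def by blast
lemma A_jp: "a \<in> A \<Longrightarrow> b \<in> A \<Longrightarrow> jordan_prod a b \<in> A" using JW unfolding JW_algebra_def by blast
lemma A_wot: "wot_closed J A" using JW unfolding JW_algebra_def by blast
lemma A_diff: "a \<in> A \<Longrightarrow> b \<in> A \<Longrightarrow> a - b \<in> A"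
  using A_add[of a "(-1) *\<^sub>R b"] A_scale[of b "-1"] by simp

lemma A_sq: assumes "a \<in> A" shows "a o\<^sub>L a \<in> A"
proof -
  have "jordan_prod a id_blinfun = a o\<^sub>L a"
    unfolding jordan_prod_def
  proof (rule blinfun_eqI)
    fix x
    have "blinfun_apply ((1/2) *\<^sub>R (a o\<^sub>L (id_blinfun + id_blinfun) o\<^sub>L a)) x = (1/2::real) *\<^sub>R (2 *\<^sub>R a (a x))"
      by (simp add: scaleR_2)
    then show "blinfun_apply ((1/2) *\<^sub>R (a o\<^sub>L (id_blinfun + id_blinfun) o\<^sub>L a)) x = blinfun_apply (a o\<^sub>L a) x"
      by simp
  qed
  then show ?thesis using A_jp[OF assms A_id] by simp
qed

lemma A_cmp: assumes "a \<in> A" "b \<in> A" "comm a b" shows "a o\<^sub>L b \<in> A"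
proof -
  have "a o\<^sub>L b = (1/2) *\<^sub>R (((a + b) o\<^sub>L (a + b)) - (a o\<^sub>L a) - (b o\<^sub>L b))"
  proof (rule blinfun_eqI)
    fix x
    have ba: "b (a x) = a (b x)" using comm_app[OF assms(3)] by simp
    have "((a + b) o\<^sub>L (a + b)) x - (a o\<^sub>L a) x - (b o\<^sub>L b) x = 2 *\<^sub>R a (b x)"
      by (simp add: scaleR_2 ba)
    then show "(a o\<^sub>L b) x = ((1/2) *\<^sub>R (((a + b) o\<^sub>L (a + b)) - (a o\<^sub>L a) - (b o\<^sub>L b))) x"
      by (simp only: minus_blinfun.rep_eq scaleR_blinfun.rep_eq) simp
  qed
  also have "\<dots> \<in> A" using assms by (intro A_scale A_diff A_sq A_add)
  finally show ?thesis .
qed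

lemma A_pw: "a \<in> A \<Longrightarrow> pw a n \<in> A"
  by (induction n) (simp_all add: A_id A_cmp comm_pw comm_refl)

lemma A_sum: "finite K \<Longrightarrow> (\<And>k. k \<in> K \<Longrightarrow> D k \<in> A) \<Longrightarrow> sum D K \<in> A"
  by (induction K rule: finite_induct) (simp_all add: A_zero A_add)

lemma A_lim:
  fixes T :: "'h \<Rightarrow>\<^sub>L 'h"
  assumes an: "\<And>n. a n \<in> A" and la: "\<And>x. (\<lambda>n. a n x) \<longlonglongrightarrow> T x"
  shows "T \<in> A"
proof -
  have "T \<in> BH J" unfolding BH_def
  proof (rule CollectI, rule blinfun_eqI)
    fix x
    have "(\<lambda>n. J (a n x)) \<longlonglongrightarrow> J (T x)" by (rule blinfun.tendsto[OF tendsto_const la])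
    moreover have "J (a n x) = a n (J x)" for n
    proof -
      have "comm (a n) J" using A_BH[OF an[of n]] unfolding BH_def comm_def by simp
      then show ?thesis using comm_app by metis
    qed
    ultimately have "(\<lambda>n. a n (J x)) \<longlonglongrightarrow> J (T x)" by simp
    then show "(T o\<^sub>L J) x = (J o\<^sub>L T) x" using la[of "J x"] LIMSEQ_unique by simp
  qed
  moreover have "\<exists>a\<in>A. \<forall>(x,y)\<in>F. \<bar>inner ((T - a) x) y\<bar> < e" if "finite F" "e > 0" for F e
  proof -
    have ev: "eventually (\<lambda>n. \<bar>inner ((T - a n) (fst p)) (snd p)\<bar> < e) sequentially" for p
    proof -
      have "(\<lambda>n. inner (T (fst p) - a n (fst p)) (snd p)) \<longlonglongrightarrow> inner (T (fst p) - T (fst p)) (snd p)"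
        by (rule tendsto_inner[OF tendsto_diff[OF tendsto_const la] tendsto_const])
      then have "(\<lambda>n. \<bar>inner (T (fst p) - a n (fst p)) (snd p)\<bar>) \<longlonglongrightarrow> 0"
        using tendsto_rabs_zero by fastforce
      from order_tendstoD(2)[OF this \<open>e>0\<close>] show ?thesis by simp
    qed
    have "eventually (\<lambda>n. \<forall>p\<in>F. \<bar>inner ((T - a n) (fst p)) (snd p)\<bar> < e) sequentially"
      by (rule eventually_ball_finite[OF \<open>finite F\<close>]) (intro ballI ev)
    then obtain N where N: "\<forall>n\<ge>N. \<forall>p\<in>F. \<bar>inner ((T - a n) (fst p)) (snd p)\<bar> < e"
      unfolding eventually_sequentially by blast
    obtain n where "\<forall>p\<in>F. \<bar>inner ((T - a n) (fst p)) (snd p)\<bar> < e" using N by blast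
    then show ?thesis using an[of n] by (intro bexI[of _ "a n"]) auto
  qed
  ultimately show ?thesis using A_wot unfolding wot_closed_def by blast
qed

end


lemma symop_sum: "(\<And>k. k \<in> K \<Longrightarrow> symop (D k)) \<Longrightarrow> symop (sum D K)"
  by (induction K rule: infinite_finite_induct) (simp_all add: symop_zero symop_add)

lemma posop_sum: "(\<And>k. k \<in> K \<Longrightarrow> posop (D k)) \<Longrightarrow> posop (sum D K)"
proof (induction K rule: infinite_finite_induct)
  case (infinite A) then show ?case by (simp add: posop_def symop_zero)
next
  case empty then show ?case by (simp add: posop_def symop_zero)
next
  case (insert x F) then show ?case by (simp add: posop_add)
qed

lemma comm_zero: "comm K 0" by (simp add: comm_def)

lemma comm_sum: "(\<And>k. k \<in> I \<Longrightarrow> comm K (D k)) \<Longrightarrow> comm K (sum D I)"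
  by (induction I rule: infinite_finite_induct) (simp_all add: comm_zero comm_add)

lemma geom_bound: fixes r :: real assumes "0 \<le> r" "r < 1" shows "(\<Sum>n<k. r^n) \<le> 1/(1-r)"
proof -
  have "(\<Sum>n<k. r^n) = (1 - r^k)/(1-r)" using assms sum_gp_strict[of r k] by simp
  also have "\<dots> \<le> 1/(1-r)" using assms by (intro divide_right_mono) auto
  finally show ?thesis .
qed

lemma inv_symop:
  assumes sX: "symop X" and i1: "X o\<^sub>L Xi = id_blinfun" and i2: "Xi o\<^sub>L X = id_blinfun"
  shows "symop Xi"
  unfolding symop_def
proof (intro allI)
  fix a b
  have "X (Xi b) = b" using i1 by (metis blinfun_apply_blinfun_compose blinfun_apply_id_blinfun)
  moreover have "X (Xi a) = a" using i1 by (metis blinfun_apply_blinfun_compose blinfun_apply_id_blinfun)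
  ultimately show "inner (Xi a) b = inner a (Xi b)" using symopD[OF sX, of "Xi a" "Xi b"] by simp
qed

lemma inv_app: assumes "X o\<^sub>L Xi = id_blinfun" shows "X (Xi y) = y"
proof -
  have "(X o\<^sub>L Xi) y = y" using assms by simp
  then show ?thesis by simp
qed

lemma inv_ineq:
  assumes pX: "posop X" and i1: "X o\<^sub>L Xi = id_blinfun"
  shows "2 * inner y z - inner (X z) z \<le> inner (Xi y) y"
proof -
  let ?u = "Xi y"
  have Xu: "X ?u = y" by (rule inv_app[OF i1])
  have s: "symop X" using pX posop_def by blast
  have "0 \<le> inner (X (z - ?u)) (z - ?u)" using pX posopD by blast
  also have "\<dots> = inner (X z) z - 2 * inner (X z) ?u + inner (X ?u) ?u"
    by (simp add: blinfun.diff_right inner_diff_left inner_diff_right symopD[OF s, of ?u z] inner_commute[of z "X ?u"] inner_commute[of "X z" ?u])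
  also have "inner (X z) ?u = inner z y" using symopD[OF s, of z ?u] Xu by simp
  finally show ?thesis using Xu by (simp add: inner_commute)
qed

lemma inv_pos:
  assumes pT: "posop T" and i1: "(id_blinfun + T) o\<^sub>L Xi = id_blinfun" and i2: "Xi o\<^sub>L (id_blinfun + T) = id_blinfun"
  shows "posop Xi" and "ople Xi id_blinfun"
proof -
  have sX: "symop (id_blinfun + T)" using pT symop_add symop_id posop_def by blast
  have sXi: "symop Xi" by (rule inv_symop[OF sX i1 i2])
  have key: "(norm (Xi y))^2 \<le> inner (Xi y) y" for y
  proof -
    have "y = (id_blinfun + T) (Xi y)" using inv_app[OF i1] by simp
    then have "inner (Xi y) y = inner (Xi y) (Xi y) + inner (Xi y) (T (Xi y))"
      by (metis blinfun_apply_id_blinfun inner_add_right plus_blinfun.rep_eq)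
    moreover have "0 \<le> inner (Xi y) (T (Xi y))" using posopD[OF pT, of "Xi y"] by (simp add: inner_commute)
    ultimately show ?thesis by (simp add: power2_norm_eq_inner)
  qed
  show "posop Xi" unfolding posop_def using sXi key by (meson order_trans zero_le_power2)
  show "ople Xi id_blinfun" unfolding ople_def
  proof (intro conjI allI sXi symop_id)
    fix y
    have k: "(norm (Xi y))^2 \<le> inner (Xi y) y" by (rule key)
    have c: "inner (Xi y) y \<le> norm (Xi y) * norm y" by (rule norm_cauchy_schwarz)
    have "norm (Xi y) \<le> norm y"
    proof (cases "norm (Xi y) = 0")
      case True then show ?thesis by simp
    next
      case False
      have "norm (Xi y) * norm (Xi y) \<le> norm y * norm (Xi y)" using k c by (simp add: power2_eq_square mult.commute)
      moreover have "0 < norm (Xi y)" using False by simp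
      ultimately show ?thesis by (rule mult_right_le_imp_le)
    qed
    then have "inner (Xi y) y \<le> norm y * norm y" using c by (simp add: mult_right_mono order_trans)
    then show "inner (Xi y) y \<le> inner (id_blinfun y) y" by (simp add: power2_norm_eq_inner[symmetric] power2_eq_square)
  qed
qed


lemma inv_le_T:
  assumes pT: "posop T" and i1: "(id_blinfun + T) o\<^sub>L Xi = id_blinfun" and i2: "Xi o\<^sub>L (id_blinfun + T) = id_blinfun"
  shows "ople (id_blinfun - Xi) T"
proof -
  have pX: "posop (id_blinfun + T)" by (rule posop_add[OF posop_id pT])
  have sXi: "symop Xi" using inv_pos[OF pT i1 i2] posop_def by blast
  show ?thesis unfolding ople_def
  proof (intro conjI allI symop_diff symop_id sXi)
    show "symop T" using pT posop_def by blast
    fix y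
    have "2 * inner y y - inner ((id_blinfun + T) y) y \<le> inner (Xi y) y" by (rule inv_ineq[OF pX i1])
    then show "inner ((id_blinfun - Xi) y) y \<le> inner (T y) y" by (simp add: inner_diff_left inner_add_left)
  qed
qed

lemma inv_anti:
  assumes pT1: "posop T1" and pT2: "posop T2" and le: "ople T1 T2"
    and a1: "(id_blinfun + T1) o\<^sub>L X1 = id_blinfun" and a2: "X1 o\<^sub>L (id_blinfun + T1) = id_blinfun"
    and b1: "(id_blinfun + T2) o\<^sub>L X2 = id_blinfun" and b2: "X2 o\<^sub>L (id_blinfun + T2) = id_blinfun"
  shows "ople X2 X1"
  unfolding ople_def
proof (intro conjI allI)
  show "symop X2" using inv_pos[OF pT2 b1 b2] posop_def by blast
  show "symop X1" using inv_pos[OF pT1 a1 a2] posop_def by blast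
  fix y
  let ?z = "X2 y"
  have pX: "posop (id_blinfun + T1)" by (rule posop_add[OF posop_id pT1])
  have "2 * inner y ?z - inner ((id_blinfun + T1) ?z) ?z \<le> inner (X1 y) y" by (rule inv_ineq[OF pX a1])
  moreover have "inner ((id_blinfun + T1) ?z) ?z \<le> inner ((id_blinfun + T2) ?z) ?z"
    using le unfolding ople_def by (simp add: inner_add_left)
  moreover have "(id_blinfun + T2) ?z = y" by (rule inv_app[OF b1])
  ultimately show "inner (X2 y) y \<le> inner (X1 y) y" by (simp add: inner_commute)
qed

context jw begin

lemma A_inv:
  assumes TA: "T \<in> A" and pT: "posop T"
  shows "\<exists>Xi\<in>A. (id_blinfun + T) o\<^sub>L Xi = id_blinfun \<and> Xi o\<^sub>L (id_blinfun + T) = id_blinfun"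
proof -
  define c where "c = 1 / (1 + norm T)"
  have t: "0 < 1 + norm T" using norm_ge_zero[of T] by linarith
  have c0: "0 < c" "c \<le> 1" unfolding c_def using t by (simp_all add: field_simps)
  have cT: "c * (1 + norm T) = 1" unfolding c_def using t by (simp add: field_simps)
  define W where "W = (1 - c) *\<^sub>R id_blinfun - c *\<^sub>R T"
  have WA: "W \<in> A" unfolding W_def by (intro A_diff A_scale A_id TA)
  have sT: "symop T" using pT posop_def by blast
  have sW: "symop W" unfolding W_def by (intro symop_diff symop_scale symop_id sT)
  have Wform: "inner (W x) x = (1 - c) * (norm x)^2 - c * inner (T x) x" for x
    unfolding W_def by (simp add: inner_diff_left power2_norm_eq_inner)
  have pW: "posop W" unfolding posop_def
  proof (intro conjI allI sW)
    fix x
    have "c * inner (T x) x \<le> c * (norm T * (norm x)^2)" using inner_le_norm[of T x] c0 by (simp add: mult_left_mono)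
    also have "\<dots> = (c * (1 + norm T)) * (norm x)^2 - c * (norm x)^2" by (simp add: algebra_simps)
    also have "\<dots> = (1 - c) * (norm x)^2" using cT by (simp add: algebra_simps)
    finally show "0 \<le> inner (W x) x" using Wform by simp
  qed
  have nW: "norm W \<le> 1 - c"
  proof (rule posop_norm_le[OF pW])
    show "0 \<le> 1 - c" using c0 by simp
    fix x show "inner (W x) x \<le> (1 - c) * (norm x)^2" using Wform posopD[OF pT, of x] c0 by simp
  qed
  define N where "N k = (\<Sum>n<k. pw W n)" for k
  have NA: "N k \<in> A" for k unfolding N_def by (intro A_sum A_pw WA) simp
  have sN: "symop (N k)" for k unfolding N_def by (intro symop_sum symop_pw sW)
  have incN: "ople (N k) (N (Suc k))" for k
  proof -
    have "N (Suc k) - N k = pw W k" unfolding N_def by simp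
    then show ?thesis using ople_posop sN posop_pw[OF pW] by metis
  qed
  have bdN: "norm (N k) \<le> 1/c" for k
  proof -
    have "norm (N k) \<le> (\<Sum>n<k. norm (pw W n))" unfolding N_def by (rule norm_sum)
    also have "\<dots> \<le> (\<Sum>n<k. (1-c)^n)" by (intro sum_mono norm_pw nW)
    also have "\<dots> \<le> 1/(1-(1-c))" using c0 by (intro geom_bound) auto
    finally show ?thesis by simp
  qed
  obtain L :: "'h \<Rightarrow>\<^sub>L 'h" where lim: "\<And>x. (\<lambda>k. N k x) \<longlonglongrightarrow> L x" and nL: "norm L \<le> 1/c"
    using vigier[of N, OF sN incN bdN] by blast
  have LA: "L \<in> A" by (rule A_lim[OF NA lim])
  have tele: "(id_blinfun - W) o\<^sub>L N k = id_blinfun - pw W k" for k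
  proof (induction k)
    case 0 then show ?case by (simp add: N_def)
  next
    case (Suc k)
    have "(id_blinfun - W) o\<^sub>L N (Suc k) = ((id_blinfun - W) o\<^sub>L N k) + ((id_blinfun - W) o\<^sub>L pw W k)"
      unfolding N_def by (simp add: cmp_add_r)
    also have "\<dots> = id_blinfun - pw W (Suc k)" using Suc by (simp add: cmp_diff_l)
    finally show ?case .
  qed
  have commN: "comm W (N k)" for k unfolding N_def by (intro comm_sum comm_pw comm_refl)
  have pw0: "(\<lambda>k. pw W k x) \<longlonglongrightarrow> 0" for x
  proof (rule tendsto_0_le[of "\<lambda>k. (1-c)^k" _ _ "norm x"])
    show "(\<lambda>k. (1-c)^k) \<longlonglongrightarrow> 0" using c0 by (intro LIMSEQ_power_zero) auto
    show "\<forall>\<^sub>F k in sequentially. norm (pw W k x) \<le> norm ((1-c)^k) * norm x"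
    proof (rule always_eventually, rule allI)
      fix k
      have "norm (pw W k x) \<le> norm (pw W k) * norm x" by (rule norm_blinfun)
      also have "\<dots> \<le> (1-c)^k * norm x" by (intro mult_right_mono norm_pw nW) simp
      finally show "norm (pw W k x) \<le> norm ((1-c)^k) * norm x" using c0 by simp
    qed
  qed
  have r1: "(id_blinfun - W) o\<^sub>L L = id_blinfun"
  proof (rule blinfun_eqI)
    fix x
    have "(\<lambda>k. (id_blinfun - W) (N k x)) \<longlonglongrightarrow> (id_blinfun - W) (L x)" by (rule blinfun.tendsto[OF tendsto_const lim])
    moreover have "(id_blinfun - W) (N k x) = x - pw W k x" for k
      using tele[of k] by (metis blinfun_apply_blinfun_compose bl(2) blinfun_apply_id_blinfun)
    moreover have "(\<lambda>k. x - pw W k x) \<longlonglongrightarrow> x - 0" using pw0 by (intro tendsto_diff tendsto_const)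
    ultimately show "((id_blinfun - W) o\<^sub>L L) x = id_blinfun x" using LIMSEQ_unique by fastforce
  qed
  have r2: "L o\<^sub>L (id_blinfun - W) = id_blinfun"
  proof (rule blinfun_eqI)
    fix x
    have "(\<lambda>k. N k ((id_blinfun - W) x)) \<longlonglongrightarrow> L ((id_blinfun - W) x)" by (rule lim)
    moreover have "N k ((id_blinfun - W) x) = x - pw W k x" for k
    proof -
      have "N k ((id_blinfun - W) x) = (id_blinfun - W) (N k x)"
        using comm_app[OF comm_diff[OF comm_id commN[of k, THEN comm_sym, unfolded comm_def, folded comm_def]]] 
        by (metis comm_app comm_diff comm_id comm_sym commN)
      then show ?thesis using tele[of k] by (metis blinfun_apply_blinfun_compose bl(2) blinfun_apply_id_blinfun)
    qed
    moreover have "(\<lambda>k. x - pw W k x) \<longlonglongrightarrow> x - 0" using pw0 by (intro tendsto_diff tendsto_const)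
    ultimately show "(L o\<^sub>L (id_blinfun - W)) x = id_blinfun x" using LIMSEQ_unique by fastforce
  qed
  have X: "id_blinfun + T = (1/c) *\<^sub>R (id_blinfun - W)"
    unfolding W_def using c0 by (intro blinfun_eqI) (simp add: algebra_simps)
  show ?thesis
  proof (intro bexI[of _ "c *\<^sub>R L"] conjI)
    show "c *\<^sub>R L \<in> A" by (intro A_scale LA)
    show "(id_blinfun + T) o\<^sub>L (c *\<^sub>R L) = id_blinfun" unfolding X using c0 r1 by (simp add: cmp_scale_l cmp_scale_r)
    show "(c *\<^sub>R L) o\<^sub>L (id_blinfun + T) = id_blinfun" unfolding X using c0 r2 by (simp add: cmp_scale_l cmp_scale_r)
  qed
qed

end


inductive nn :: "('a::real_normed_vector \<Rightarrow>\<^sub>L 'a) \<Rightarrow> ('a \<Rightarrow>\<^sub>L 'a) \<Rightarrow> bool" for C where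
  nn_pw: "nn C (pw C k)"
| nn_add: "nn C a \<Longrightarrow> nn C b \<Longrightarrow> nn C (a + b)"
| nn_scale: "0 \<le> r \<Longrightarrow> nn C a \<Longrightarrow> nn C (r *\<^sub>R a)"

lemma nn_zero: "nn C 0"
  using nn_scale[of 0 C "pw C 0"] nn_pw[of C 0] by simp

lemma nn_C: "nn C C" using nn_pw[of C 1] by simp

lemma nn_mult_pw: "nn C b \<Longrightarrow> nn C (pw C k o\<^sub>L b)"
proof (induction rule: nn.induct)
  case (nn_pw j) then show ?case using nn.nn_pw[of C "k + j"] by (simp add: pw_add)
next
  case (nn_add a b) then show ?case by (simp add: cmp_add_r nn.nn_add)
next
  case (nn_scale r a) then show ?case by (simp add: cmp_scale_r nn.nn_scale)
qed

lemma nn_mult: "nn C a \<Longrightarrow> nn C b \<Longrightarrow> nn C (a o\<^sub>L b)"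
proof (induction rule: nn.induct)
  case (nn_pw k) then show ?case by (rule nn_mult_pw)
next
  case (nn_add a1 a2) then show ?case by (simp add: cmp_add_l nn.nn_add)
next
  case (nn_scale r a) then show ?case by (simp add: cmp_scale_l nn.nn_scale)
qed

lemma nn_pos: assumes "posop C" shows "nn C a \<Longrightarrow> posop a"
  by (induction rule: nn.induct) (simp_all add: assms posop_pw posop_add posop_scale)

lemma nn_comm: assumes "comm K C" shows "nn C a \<Longrightarrow> comm K a"
  by (induction rule: nn.induct) (simp_all add: assms comm_pw comm_add comm_scale)

context jw begin

lemma nn_A: assumes "C \<in> A" shows "nn C a \<Longrightarrow> a \<in> A"
  by (induction rule: nn.induct) (simp_all add: assms A_pw A_add A_scale)

lemma A_sqrt:
  assumes ZA: "Z \<in> A" and pZ: "posop Z" and Z1: "ople Z id_blinfun"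
  shows "\<exists>P\<in>A. posop P \<and> P o\<^sub>L P = Z \<and> (\<forall>K. comm K Z \<longrightarrow> comm K P)"
proof -
  define C where "C = id_blinfun - Z"
  have CA: "C \<in> A" unfolding C_def by (intro A_diff A_id ZA)
  have pC: "posop C" unfolding C_def using Z1 ople_posop by blast
  have nC: "norm C \<le> 1"
  proof (rule posop_norm_le[OF pC])
    fix x show "inner (C x) x \<le> 1 * (norm x)^2"
      using posopD[OF pZ, of x] unfolding C_def by (simp add: inner_diff_left power2_norm_eq_inner)
  qed simp
  define B where "B = rec_nat 0 (\<lambda>n b. (1/2) *\<^sub>R (C + (b o\<^sub>L b)))"
  have B0: "B 0 = 0" and BS: "\<And>n. B (Suc n) = (1/2) *\<^sub>R (C + (B n o\<^sub>L B n))" unfolding B_def by simp_all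
  have Bcomm: "comm K C \<Longrightarrow> comm K (B n)" for K n
    by (induction n) (simp_all add: B0 BS comm_zero comm_scale comm_add comm_cmp)
  have BB: "comm (B m) (B n)" for m n by (rule Bcomm[OF comm_sym[OF Bcomm[OF comm_refl]]])
  have nnB: "nn C (B n) \<and> nn C (B (Suc n) - B n)" for n
  proof (induction n)
    case 0
    have "B (Suc 0) - B 0 = (1/2) *\<^sub>R C" by (simp add: B0 BS)
    moreover have "nn C ((1/2) *\<^sub>R C)" by (rule nn_scale[OF _ nn_C]) simp
    ultimately show ?case using nn_zero[of C] by (simp add: B0)
  next
    case (Suc n)
    let ?u = "B (Suc n)" and ?v = "B n"
    have c: "?u o\<^sub>L ?v = ?v o\<^sub>L ?u" using BB unfolding comm_def by blast
    have "B (Suc (Suc n)) - B (Suc n) = (1/2) *\<^sub>R ((?u - ?v) o\<^sub>L (?u + ?v))"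
    proof -
      have "(?u - ?v) o\<^sub>L (?u + ?v) = (?u o\<^sub>L ?u) - (?v o\<^sub>L ?v)"
        by (simp add: cmp_add_r cmp_diff_l c algebra_simps)
      then show ?thesis by (simp only: BS) (simp add: algebra_simps)
    qed
    moreover have "nn C (?u + ?v)" using Suc by (metis diff_add_cancel nn_add)
    moreover have "nn C ?u" using Suc BS nn_add nn_C nn_mult nn_scale by (metis less_eq_real_def zero_less_divide_1_iff zero_less_numeral)
    ultimately show ?case using Suc nn_mult nn_scale by (metis less_eq_real_def zero_less_divide_1_iff zero_less_numeral)
  qed
  have BA: "B n \<in> A" for n using nn_A[OF CA] nnB by blast
  have sB: "symop (B n)" for n using A_sym BA by blast
  have incB: "ople (B n) (B (Suc n))" for n using nnB nn_pos[OF pC] ople_posop sB by blast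
  have nB: "norm (B n) \<le> 1" for n
  proof (induction n)
    case 0 then show ?case by (simp add: B0)
  next
    case (Suc n)
    have "norm (B (Suc n)) \<le> (1/2) * (norm C + norm (B n o\<^sub>L B n))"
      by (simp add: BS norm_triangle_ineq)
    also have "\<dots> \<le> (1/2) * (1 + 1)"
    proof -
      have "norm (B n o\<^sub>L B n) \<le> norm (B n) * norm (B n)" by (rule norm_blinfun_compose)
      also have "\<dots> \<le> 1" using Suc by (simp add: mult_le_one)
      finally show ?thesis using nC by simp
    qed
    finally show ?case by simp
  qed
  obtain Bl :: "'h \<Rightarrow>\<^sub>L 'h" where lim: "\<And>x. (\<lambda>n. B n x) \<longlonglongrightarrow> Bl x" and nBl: "norm Bl \<le> 1" and sBl: "symop Bl"
    using vigier[of B, OF sB incB nB] by blast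
  have BlA: "Bl \<in> A" by (rule A_lim[OF BA lim])
  have fixB: "Bl (Bl x) = 2 *\<^sub>R Bl x - C x" for x
  proof -
    have "(\<lambda>n. B (Suc n) x) \<longlonglongrightarrow> Bl x" using lim[of x] by (rule LIMSEQ_Suc)
    moreover have "(\<lambda>n. B (Suc n) x) \<longlonglongrightarrow> (1/2) *\<^sub>R (C x + Bl (Bl x))"
    proof -
      have "(\<lambda>n. B n (B n x)) \<longlonglongrightarrow> Bl (Bl x)" by (rule lim_comp[OF lim lim nB])
      then have "(\<lambda>n. (1/2) *\<^sub>R (C x + B n (B n x))) \<longlonglongrightarrow> (1/2) *\<^sub>R (C x + Bl (Bl x))"
        by (intro tendsto_scaleR tendsto_add tendsto_const)
      then show ?thesis by (simp add: BS)
    qed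
    ultimately have "Bl x = (1/2) *\<^sub>R (C x + Bl (Bl x))" using LIMSEQ_unique by blast
    then have "2 *\<^sub>R Bl x = (2::real) *\<^sub>R ((1/2::real) *\<^sub>R (C x + Bl (Bl x)))" by simp
    also have "\<dots> = C x + Bl (Bl x)" by (simp only: scaleR_scaleR) simp
    finally have "2 *\<^sub>R Bl x = C x + Bl (Bl x)" .
    then show ?thesis by (simp add: algebra_simps)
  qed
  define P where "P = id_blinfun - Bl"
  have PA: "P \<in> A" unfolding P_def by (intro A_diff A_id BlA)
  have PP: "P o\<^sub>L P = Z"
  proof (rule blinfun_eqI)
    fix x
    show "(P o\<^sub>L P) x = Z x" unfolding P_def using fixB[of x]
      by (simp add: C_def scaleR_2 algebra_simps)
  qed
  have pP: "posop P" unfolding posop_def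
  proof (intro conjI allI)
    show "symop P" unfolding P_def by (intro symop_diff symop_id sBl)
    fix x
    have "inner (Bl x) x \<le> norm Bl * (norm x)^2" by (rule inner_le_norm)
    also have "\<dots> \<le> (norm x)^2" using nBl by (simp add: mult_left_le_one_le)
    finally show "0 \<le> inner (P x) x" unfolding P_def by (simp add: inner_diff_left power2_norm_eq_inner)
  qed
  have "comm K P" if "comm K Z" for K
  proof -
    have "comm K C" unfolding C_def by (intro comm_diff comm_id that)
    then have "comm K Bl" using comm_lim[OF lim] Bcomm by blast
    then show ?thesis unfolding P_def by (intro comm_diff comm_id)
  qed
  then show ?thesis using PA pP PP by blast
qed

end


lemma ople_neg: "ople a b \<Longrightarrow> ople (- b) (- a)"
  unfolding ople_def symop_def by (simp add: inner_commute)

context jw begin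

lemma A_kerproj:
  assumes VA: "V \<in> A"
  shows "\<exists>F\<in>A. F o\<^sub>L F = F \<and> V o\<^sub>L F = 0 \<and> (\<forall>U. V o\<^sub>L U = 0 \<longrightarrow> F o\<^sub>L U = U) \<and> (\<forall>K. comm K V \<longrightarrow> comm K F)"
proof -
  define c where "c = (norm V)^2 + 1"
  have c0: "0 < c" unfolding c_def by (simp add: add_nonneg_pos)
  have sV: "symop V" by (rule A_sym[OF VA])
  define G where "G = id_blinfun - (1/c) *\<^sub>R (V o\<^sub>L V)"
  have GA: "G \<in> A" unfolding G_def by (intro A_diff A_id A_scale A_sq VA)
  have sG: "symop G" using A_sym[OF GA] .
  have Gform: "inner (G x) x = (norm x)^2 - (norm (V x))^2 / c" for x
  proof -
    have "inner (V (V x)) x = inner (V x) (V x)" by (rule symopD[OF sV])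
    then show ?thesis unfolding G_def by (simp add: inner_diff_left power2_norm_eq_inner)
  qed
  have pG: "posop G" unfolding posop_def
  proof (intro conjI allI sG)
    fix x
    have "norm (V x) \<le> norm V * norm x" by (rule norm_blinfun)
    then have "(norm (V x))^2 \<le> (norm V * norm x)^2" by (simp add: power_mono)
    also have "\<dots> \<le> c * (norm x)^2" unfolding c_def by (simp add: power_mult_distrib algebra_simps)
    finally have "(norm (V x))^2 / c \<le> (norm x)^2" using c0 by (simp add: divide_le_eq mult.commute)
    then show "0 \<le> inner (G x) x" using Gform by simp
  qed
  have nG: "norm G \<le> 1"
  proof (rule posop_norm_le[OF pG])
    fix x show "inner (G x) x \<le> 1 * (norm x)^2" using Gform c0 by simp
  qed simp
  define S where "S n = - pw G n" for n
  have sS: "symop (S n)" for n unfolding S_def using symop_scale[OF symop_pw[OF sG], of "-1"] by simp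
  have incS: "ople (S n) (S (Suc n))" for n
  proof -
    have "ople (pw G (Suc n)) (pw G n)" by (rule pw_decr[OF pG nG])
    then show ?thesis unfolding S_def by (rule ople_neg)
  qed
  have nS: "norm (S n) \<le> 1" for n unfolding S_def using norm_pw[OF nG, of n] by simp
  obtain L :: "'h \<Rightarrow>\<^sub>L 'h" where limL: "\<And>x. (\<lambda>n. S n x) \<longlonglongrightarrow> L x"
    using vigier[of S, OF sS incS nS] by blast
  define F where "F = - L"
  have lim: "(\<lambda>n. pw G n x) \<longlonglongrightarrow> F x" for x
  proof -
    have "(\<lambda>n. - S n x) \<longlonglongrightarrow> - L x" by (rule tendsto_minus[OF limL])
    then show ?thesis unfolding S_def F_def by simp
  qed
  have FA: "F \<in> A" by (rule A_lim[OF A_pw[OF GA] lim])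
  have GF: "G (F x) = F x" for x
  proof -
    have "(\<lambda>n. G (pw G n x)) \<longlonglongrightarrow> G (F x)" by (rule blinfun.tendsto[OF tendsto_const lim])
    moreover have "(\<lambda>n. G (pw G n x)) \<longlonglongrightarrow> F x" using LIMSEQ_Suc[OF lim[of x]] by simp
    ultimately show ?thesis using LIMSEQ_unique by blast
  qed
  have pwF: "pw G n (F x) = F x" for n x by (induction n) (simp_all add: GF)
  have FF: "F o\<^sub>L F = F"
  proof (rule blinfun_eqI)
    fix x
    have "(\<lambda>n. pw G n (F x)) \<longlonglongrightarrow> F (F x)" by (rule lim)
    then have "(\<lambda>n. F x) \<longlonglongrightarrow> F (F x)" by (simp only: pwF)
    then show "(F o\<^sub>L F) x = F x" by (simp add: LIMSEQ_const_iff)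
  qed
  have VF: "V o\<^sub>L F = 0"
  proof (rule blinfun_eqI)
    fix x
    have "G (F x) = F x - (1/c) *\<^sub>R V (V (F x))" unfolding G_def by simp
    then have "V (V (F x)) = 0" using GF[of x] c0 by simp
    then have "inner (V (F x)) (V (F x)) = 0" using symopD[OF sV, of "V (F x)" "F x"] by simp
    then show "(V o\<^sub>L F) x = blinfun_apply 0 x" by simp
  qed
  have FU: "F o\<^sub>L U = U" if "V o\<^sub>L U = 0" for U
  proof (rule blinfun_eqI)
    fix x
    have VU: "V (U y) = 0" for y
    proof -
      have "(V o\<^sub>L U) y = 0" using that by simp
      then show ?thesis by simp
    qed
    have GU: "G (U y) = U y" for y unfolding G_def using VU by simp
    have pu: "pw G n (U x) = U x" for n by (induction n) (simp_all add: GU)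
    have "(\<lambda>n. pw G n (U x)) \<longlonglongrightarrow> F (U x)" by (rule lim)
    then have "(\<lambda>n. U x) \<longlonglongrightarrow> F (U x)" by (simp only: pu)
    then show "(F o\<^sub>L U) x = U x" by (simp add: LIMSEQ_const_iff)
  qed
  have "comm K F" if "comm K V" for K
  proof -
    have "comm K G" unfolding G_def by (intro comm_diff comm_id comm_scale comm_cmp that)
    then show ?thesis using comm_lim[OF lim] comm_pw by blast
  qed
  then show ?thesis using FA FF VF FU by blast
qed

end


lemma ople_sub: "ople a b \<Longrightarrow> symop c \<Longrightarrow> ople (c - b) (c - a)"
  unfolding ople_def by (simp add: symop_diff inner_diff_left)

lemma posop_cmp_proj:
  assumes "posop a" "comm a E" "E o\<^sub>L E = E" "symop E"
  shows "posop (a o\<^sub>L E)"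
proof -
  have "a o\<^sub>L E = a o\<^sub>L (E o\<^sub>L E)" using assms(3) by simp
  also have "\<dots> = (a o\<^sub>L E) o\<^sub>L E" by (simp add: cmp_assoc)
  also have "\<dots> = E o\<^sub>L a o\<^sub>L E" using assms(2) unfolding comm_def by simp
  finally show ?thesis using posop_conj[OF assms(4) assms(1)] by simp
qed

lemma sum_shift1: "(\<Sum>k=1..m. f k) = (\<Sum>i<m. f (Suc i))"
  by (induction m) (simp_all add: sum.cl_ivl_Suc)

lemma self_adj_iff: "self_adj J T \<longleftrightarrow> T \<in> BH J \<and> symop T"
  unfolding self_adj_def symop_def by simp

lemma BH_diff: "a \<in> BH J \<Longrightarrow> b \<in> BH J \<Longrightarrow> a - b \<in> BH J"
  unfolding BH_def by (simp add: cmp_diff_l cmp_diff_r)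

lemma op_le_iff: "op_le J a b \<longleftrightarrow> self_adj J a \<and> self_adj J b \<and> ople a b"
  unfolding op_le_def positive_op_def ople_def self_adj_iff
  by (auto simp: BH_diff symop_diff inner_diff_left)

lemma posop_pos_part: "a \<in> A \<Longrightarrow> self_adj J a \<Longrightarrow> posop a \<Longrightarrow> a \<in> pos_part J A"
  unfolding pos_part_def positive_op_def posop_def by simp

lemma pos_part_posop: "a \<in> pos_part J A \<Longrightarrow> a \<in> A \<and> posop a"
  unfolding pos_part_def positive_op_def posop_def self_adj_iff by simp

locale jwr = jw J A for J :: "'h::{real_inner,complete_space} \<Rightarrow>\<^sub>L 'h" and A +
  fixes \<rho> :: "('h \<Rightarrow>\<^sub>L 'h) \<Rightarrow> real"
  assumes st: "is_state J A \<rho>"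
begin

lemma r_add: "a \<in> A \<Longrightarrow> b \<in> A \<Longrightarrow> \<rho> (a + b) = \<rho> a + \<rho> b" using st unfolding is_state_def by blast
lemma r_scale: "a \<in> A \<Longrightarrow> \<rho> (c *\<^sub>R a) = c * \<rho> a" using st unfolding is_state_def by blast
lemma r_pos: "a \<in> A \<Longrightarrow> posop a \<Longrightarrow> 0 \<le> \<rho> a"
  using st posop_pos_part[OF _ A_sa] unfolding is_state_def by blast
lemma r_diff: assumes "a \<in> A" "b \<in> A" shows "\<rho> (a - b) = \<rho> a - \<rho> b"
proof -
  have "\<rho> a = \<rho> (b + (a - b))" by simp
  also have "\<dots> = \<rho> b + \<rho> (a - b)" using assms by (intro r_add A_diff)
  finally show ?thesis by simp
qed
lemma r_mono: assumes "a \<in> A" "b \<in> A" "ople a b" shows "\<rho> a \<le> \<rho> b"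
proof -
  have "0 \<le> \<rho> (b - a)" using assms ople_posop by (intro r_pos A_diff) auto
  then show ?thesis using r_diff[OF assms(2,1)] by simp
qed
lemma r_sum: "finite K \<Longrightarrow> (\<And>k. k \<in> K \<Longrightarrow> D k \<in> A) \<Longrightarrow> \<rho> (sum D K) = (\<Sum>k\<in>K. \<rho> (D k))"
proof (induction K rule: finite_induct)
  case empty
  have "\<rho> ((0::real) *\<^sub>R id_blinfun) = 0 * \<rho> id_blinfun" by (rule r_scale[OF A_id])
  then show ?case by simp
next
  case (insert x F) then show ?case by (simp add: r_add A_sum)
qed

end


context jwr begin

lemma main:
  fixes \<epsilon> :: real and D :: "nat \<Rightarrow> ('h \<Rightarrow>\<^sub>L 'h)"
  assumes normal: "normal_state J A \<rho>"
    and e0: "0 < \<epsilon>" and e1: "\<epsilon> < 1/16"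
    and Dp: "\<forall>m\<ge>1. D m \<in> pos_part J A"
    and sm: "summable (\<lambda>m. \<rho> (D (Suc m)))"
    and sl: "(\<Sum>m. \<rho> (D (Suc m))) < \<epsilon>"
  shows "\<exists>E\<in>A. is_projection E \<and> \<rho> (id_blinfun - E) < 2 * \<epsilon> powr (1/4) \<and>
           (\<forall>m\<ge>1. norm (E o\<^sub>L (\<Sum>k=1..m. D k) o\<^sub>L E) < 4 * sqrt \<epsilon>)"
proof -
  define \<sigma> where "\<sigma> = (\<Sum>m. \<rho> (D (Suc m)))"
  have DA: "D k \<in> A" and pD: "posop (D k)" if "k \<in> {1..m}" for k m
    using Dp pos_part_posop that by auto
  define T where "T m = (\<Sum>k=1..m. D k)" for m
  have TA: "T m \<in> A" for m unfolding T_def by (intro A_sum DA) auto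
  have pT: "posop (T m)" for m unfolding T_def by (intro posop_sum pD) auto
  have TS: "T (Suc m) = T m + D (Suc m)" for m unfolding T_def by (simp add: sum.cl_ivl_Suc)
  have incT: "ople (T m) (T (Suc m))" for m
    using pD[of "Suc m" "Suc m"] TS[of m] pT[of m] pT[of "Suc m"] unfolding ople_posop posop_def by simp
  have rT: "\<rho> (T m) \<le> \<sigma>" for m
  proof -
    have "\<rho> (T m) = (\<Sum>k=1..m. \<rho> (D k))" unfolding T_def by (intro r_sum DA) auto
    also have "\<dots> = (\<Sum>i<m. \<rho> (D (Suc i)))" by (rule sum_shift1)
    also have "\<dots> \<le> \<sigma>" unfolding \<sigma>_def
      by (rule sum_le_suminf[OF sm]) (auto intro!: r_pos DA pD)
    finally show ?thesis .
  qed
  have "\<forall>m. \<exists>X. X \<in> A \<and> (id_blinfun + T m) o\<^sub>L X = id_blinfun \<and> X o\<^sub>L (id_blinfun + T m) = id_blinfun"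
    using A_inv[OF TA pT] by blast
  from choice[OF this] obtain Xi where XiA: "\<And>m. Xi m \<in> A"
    and i1: "\<And>m. (id_blinfun + T m) o\<^sub>L Xi m = id_blinfun" and i2: "\<And>m. Xi m o\<^sub>L (id_blinfun + T m) = id_blinfun"
    by blast
  define R where "R m = id_blinfun - Xi m" for m
  have RA: "R m \<in> A" for m unfolding R_def by (intro A_diff A_id XiA)
  have sR: "symop (R m)" for m using A_sym[OF RA] .
  have pR: "posop (R m)" for m using inv_pos(2)[OF pT i1 i2] unfolding R_def ople_posop by blast
  have RT: "ople (R m) (T m)" for m unfolding R_def by (rule inv_le_T[OF pT i1 i2])
  have incR: "ople (R m) (R (Suc m))" for m
    unfolding R_def by (intro ople_sub symop_id inv_anti[OF pT pT incT i1 i2 i1 i2])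
  have nR: "norm (R m) \<le> 1" for m
  proof (rule posop_norm_le[OF pR])
    fix x
    have "0 \<le> inner (Xi m x) x" using inv_pos(1)[OF pT i1 i2] posopD by blast
    then show "inner (R m x) x \<le> 1 * (norm x)^2" unfolding R_def by (simp add: inner_diff_left power2_norm_eq_inner)
  qed simp
  obtain Rl :: "'h \<Rightarrow>\<^sub>L 'h" where limR: "\<And>x. (\<lambda>m. R m x) \<longlonglongrightarrow> Rl x" and nRl: "norm Rl \<le> 1"
    and sRl: "symop Rl" and RRl: "\<And>m. ople (R m) Rl"
    using vigier[of R, OF sR incR nR] by blast
  have RlA: "Rl \<in> A" by (rule A_lim[OF RA limR])
  have pRl: "posop Rl" unfolding posop_def
  proof (intro conjI allI sRl)
    fix x
    have "inner (R 0 x) x \<le> inner (Rl x) x" using RRl[of 0] unfolding ople_def by blast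
    then show "0 \<le> inner (Rl x) x" using posopD[OF pR[of 0], of x] by linarith
  qed
  have rRl: "\<rho> Rl \<le> \<sigma>"
  proof -
    let ?S = "range R"
    have "\<rho> Rl = Sup (\<rho> ` ?S)"
    proof (rule normal[unfolded normal_state_def, rule_format], intro conjI)
      show "?S \<noteq> {}" by simp
      show "?S \<subseteq> pos_part J A" using RA pR A_sa posop_pos_part by blast
      show "\<forall>x\<in>?S. \<forall>y\<in>?S. \<exists>z\<in>?S. op_le J x z \<and> op_le J y z"
      proof (intro ballI)
        fix x y assume "x \<in> ?S" "y \<in> ?S"
        then obtain i j where ij: "x = R i" "y = R j" by blast
        have "ople (R i) (R (max i j))" "ople (R j) (R (max i j))"
          using ople_mono_seq[of R, OF incR sR] by auto
        then show "\<exists>z\<in>?S. op_le J x z \<and> op_le J y z" using ij op_le_iff A_sa RA by blast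
      qed
      show "\<forall>x\<in>?S. op_le J x Rl" using op_le_iff A_sa RA RlA RRl by blast
      show "\<forall>t. self_adj J t \<and> (\<forall>x\<in>?S. op_le J x t) \<longrightarrow> op_le J Rl t"
      proof (intro allI impI)
        fix t assume h: "self_adj J t \<and> (\<forall>x\<in>?S. op_le J x t)"
        have "ople Rl t" unfolding ople_def
        proof (intro conjI allI sRl)
          show "symop t" using h self_adj_iff by blast
          fix x
          have "(\<lambda>m. inner (R m x) x) \<longlonglongrightarrow> inner (Rl x) x" by (rule tendsto_inner[OF limR tendsto_const])
          moreover have "inner (R m x) x \<le> inner (t x) x" for m using h op_le_iff ople_def by blast
          ultimately show "inner (Rl x) x \<le> inner (t x) x" using LIMSEQ_le_const2 by blast
        qed
        then show "op_le J Rl t" using h op_le_iff A_sa[OF RlA] by blast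
      qed
    qed
    also have "\<dots> \<le> \<sigma>"
    proof (rule cSup_least)
      show "\<rho> ` ?S \<noteq> {}" by simp
      fix r assume "r \<in> \<rho> ` ?S"
      then obtain m where "r = \<rho> (R m)" by blast
      then show "r \<le> \<sigma>" using r_mono[OF RA TA RT] rT order_trans by metis
    qed
    finally show ?thesis .
  qed
  have rRl2: "\<rho> Rl < \<epsilon>" using rRl sl unfolding \<sigma>_def by linarith
  define \<delta> where "\<delta> = sqrt \<epsilon>"
  have d0: "0 < \<delta>" unfolding \<delta>_def using e0 by simp
  have d1: "\<delta> < 1/4"
  proof -
    have "sqrt \<epsilon> < sqrt (1/16)" using e1 by (rule real_sqrt_less_mono)
    also have "sqrt (1/16::real) = 1/4" by (simp add: real_sqrt_divide)
    finally show ?thesis unfolding \<delta>_def .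
  qed
  define Y where "Y = Rl - \<delta> *\<^sub>R id_blinfun"
  have YA: "Y \<in> A" unfolding Y_def by (intro A_diff A_scale A_id RlA)
  have sY: "symop Y" by (rule A_sym[OF YA])
  have cRlY: "comm Rl Y" unfolding Y_def by (intro comm_diff comm_scale comm_refl comm_id)
  have cYY: "comm Y Y" by (rule comm_refl)
  define c where "c = (norm Y)^2 + 1"
  have c0: "0 < c" unfolding c_def by (simp add: add_nonneg_pos)
  define Zs where "Zs = (1/c) *\<^sub>R (Y o\<^sub>L Y)"
  have ZsA: "Zs \<in> A" unfolding Zs_def by (intro A_scale A_sq YA)
  have Zform: "inner (Zs x) x = (norm (Y x))^2 / c" for x
  proof -
    have "inner (Y (Y x)) x = inner (Y x) (Y x)" by (rule symopD[OF sY])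
    then show ?thesis unfolding Zs_def by (simp add: power2_norm_eq_inner)
  qed
  have pZs: "posop Zs" unfolding posop_def
  proof (intro conjI allI)
    show "symop Zs" by (rule A_sym[OF ZsA])
    fix x show "0 \<le> inner (Zs x) x" using Zform c0 by simp
  qed
  have Zs1: "ople Zs id_blinfun" unfolding ople_def
  proof (intro conjI allI symop_id)
    show "symop Zs" by (rule A_sym[OF ZsA])
    fix x
    have "norm (Y x) \<le> norm Y * norm x" by (rule norm_blinfun)
    then have "(norm (Y x))^2 \<le> (norm Y * norm x)^2" by (simp add: power_mono)
    also have "\<dots> \<le> c * (norm x)^2" unfolding c_def by (simp add: power_mult_distrib algebra_simps)
    finally have "(norm (Y x))^2 / c \<le> (norm x)^2" using c0 by (simp add: divide_le_eq mult.commute)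
    then show "inner (Zs x) x \<le> inner (id_blinfun x) x" using Zform by (simp add: power2_norm_eq_inner)
  qed
  have cZ: "comm K Zs" if "comm K Y" for K unfolding Zs_def by (intro comm_scale comm_cmp that)
  obtain P0 where P0A: "P0 \<in> A" and pP0: "posop P0" and P0sq: "P0 o\<^sub>L P0 = Zs"
    and cP0: "\<And>K. comm K Zs \<Longrightarrow> comm K P0"
    using A_sqrt[OF ZsA pZs Zs1] by blast
  define P where "P = sqrt c *\<^sub>R P0"
  have PA: "P \<in> A" unfolding P_def by (intro A_scale P0A)
  have pP: "posop P" unfolding P_def using c0 by (intro posop_scale pP0) simp
  have PP: "P o\<^sub>L P = Y o\<^sub>L Y"
  proof -
    have "P o\<^sub>L P = (sqrt c * sqrt c) *\<^sub>R (P0 o\<^sub>L P0)" unfolding P_def by (simp add: cmp_scale_l cmp_scale_r)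
    also have "\<dots> = c *\<^sub>R Zs" using c0 P0sq by simp
    also have "\<dots> = Y o\<^sub>L Y" unfolding Zs_def using c0 by simp
    finally show ?thesis .
  qed
  have cPK: "comm K P" if "comm K Y" for K unfolding P_def by (intro comm_scale cP0 cZ that)
  have cYP: "comm Y P" by (rule cPK[OF cYY])
  have cRlP: "comm Rl P" by (rule cPK[OF cRlY])
  define V where "V = P - Y"
  define U where "U = P + Y"
  have VA: "V \<in> A" unfolding V_def by (intro A_diff PA YA)
  have VU: "V o\<^sub>L U = 0"
  proof -
    have "V o\<^sub>L U = (P o\<^sub>L P) + (P o\<^sub>L Y) - (Y o\<^sub>L P) - (Y o\<^sub>L Y)" unfolding V_def U_def
      by (simp add: cmp_add_r cmp_diff_l algebra_simps)
    then show ?thesis using PP cYP unfolding comm_def by simp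
  qed
  obtain F where FA: "F \<in> A" and FF: "F o\<^sub>L F = F" and VF: "V o\<^sub>L F = 0"
    and FU0: "\<And>U :: 'h \<Rightarrow>\<^sub>L 'h. V o\<^sub>L U = 0 \<Longrightarrow> F o\<^sub>L U = U" and cF: "\<And>K :: 'h \<Rightarrow>\<^sub>L 'h. comm K V \<Longrightarrow> comm K F"
    using A_kerproj[OF VA] by blast
  have FU: "F o\<^sub>L U = U" by (rule FU0[OF VU])
  have cVK: "comm K V" if "comm K Y" for K unfolding V_def by (intro comm_diff cPK that)
  have cRlF: "comm Rl F" by (rule cF[OF cVK[OF cRlY]])
  have cYF: "comm Y F" by (rule cF[OF cVK[OF cYY]])
  have cPF: "comm P F" by (rule cF) (simp add: V_def comm_diff comm_refl comm_sym[OF cYP])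
  have sF: "symop F" by (rule A_sym[OF FA])
  define E where "E = id_blinfun - F"
  have EA: "E \<in> A" unfolding E_def by (intro A_diff A_id FA)
  have sE: "symop E" by (rule A_sym[OF EA])
  have EE: "E o\<^sub>L E = E" unfolding E_def using FF by (simp add: cmp_diff_l cmp_diff_r)
  have EF: "E o\<^sub>L F = 0" unfolding E_def using FF by (simp add: cmp_diff_l)
  have cRlE: "comm Rl E" unfolding E_def by (intro comm_diff comm_id cRlF)
  have cPE: "comm P E" unfolding E_def by (intro comm_diff comm_id cPF)
  have UE: "U o\<^sub>L E = 0"
  proof -
    have "comm U F" unfolding U_def by (rule comm_sym[OF comm_add[OF comm_sym[OF cPF] comm_sym[OF cYF]]])
    then have "U o\<^sub>L F = U" using FU unfolding comm_def by simp
    then show ?thesis unfolding E_def by (simp add: cmp_diff_r)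
  qed
  have YE: "Y o\<^sub>L E = - (P o\<^sub>L E)"
  proof -
    have "(P o\<^sub>L E) + (Y o\<^sub>L E) = 0" using UE unfolding U_def by (simp add: cmp_add_l)
    then show ?thesis by (simp add: eq_neg_iff_add_eq_0 add.commute)
  qed
  have YF: "Y o\<^sub>L F = P o\<^sub>L F"
  proof -
    have "(P o\<^sub>L F) - (Y o\<^sub>L F) = 0" using VF unfolding V_def by (simp add: cmp_diff_l)
    then show ?thesis by simp
  qed
  have K1: "inner (Rl y) y \<le> \<delta> * (norm y)^2" if "E y = y" for y
  proof -
    have "Y y = Y (E y)" using that by simp
    also have "\<dots> = - P (E y)"
    proof -
      have "(Y o\<^sub>L E) y = (- (P o\<^sub>L E)) y" using YE by simp
      then show ?thesis by simp
    qed
    finally have "Y y = - P y" using that by simp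
    then have "inner (Y y) y \<le> 0" using posopD[OF pP, of y] by simp
    moreover have "Rl y = Y y + \<delta> *\<^sub>R y" unfolding Y_def by simp
    ultimately show ?thesis by (simp add: inner_add_left power2_norm_eq_inner)
  qed
  have rF: "\<rho> F < \<delta>"
  proof -
    have dec: "Rl = (Rl o\<^sub>L E) + (\<delta> *\<^sub>R F + (P o\<^sub>L F))"
    proof -
      have "Rl o\<^sub>L F = (Y + \<delta> *\<^sub>R id_blinfun) o\<^sub>L F" unfolding Y_def by simp
      also have "\<dots> = \<delta> *\<^sub>R F + (P o\<^sub>L F)" using YF by (simp add: cmp_add_l cmp_scale_l)
      finally have "Rl o\<^sub>L F = \<delta> *\<^sub>R F + (P o\<^sub>L F)" .
      moreover have "Rl = (Rl o\<^sub>L E) + (Rl o\<^sub>L F)" unfolding E_def by (simp add: cmp_diff_r)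
      ultimately show ?thesis by simp
    qed
    have REA: "Rl o\<^sub>L E \<in> A" by (rule A_cmp[OF RlA EA cRlE])
    have PFA: "P o\<^sub>L F \<in> A" by (rule A_cmp[OF PA FA cPF])
    have "\<rho> Rl = \<rho> (Rl o\<^sub>L E) + (\<delta> * \<rho> F + \<rho> (P o\<^sub>L F))"
      using dec r_add[OF REA] r_add[OF A_scale[OF FA] PFA] r_scale[OF FA]
      by (metis A_add A_scale FA PFA)
    moreover have "0 \<le> \<rho> (Rl o\<^sub>L E)" by (intro r_pos REA posop_cmp_proj pRl cRlE EE sE)
    moreover have "0 \<le> \<rho> (P o\<^sub>L F)" by (intro r_pos PFA posop_cmp_proj pP cPF FF sF)
    ultimately have "\<delta> * \<rho> F \<le> \<rho> Rl" by linarith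
    also have "\<dots> < \<epsilon>" by (rule rRl2)
    also have "\<epsilon> = \<delta> * \<delta>" unfolding \<delta>_def using e0 by simp
    finally show ?thesis using d0 by simp
  qed
  have rE: "\<rho> (id_blinfun - E) < 2 * \<epsilon> powr (1/4)"
  proof -
    have "id_blinfun - E = F" unfolding E_def by simp
    then have "\<rho> (id_blinfun - E) < \<delta>" using rF by simp
    also have "\<delta> = (\<epsilon> powr (1/4))^2"
    proof -
      have "(\<epsilon> powr (1/4))^2 = \<epsilon> powr (1/4) * \<epsilon> powr (1/4)" by (rule power2_eq_square)
      also have "\<dots> = \<epsilon> powr (1/4 + 1/4)" by (rule powr_add[symmetric])
      also have "\<dots> = \<epsilon> powr (1/2)" by simp
      also have "\<dots> = sqrt \<epsilon>" using e0 by (simp add: powr_half_sqrt)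
      finally show ?thesis unfolding \<delta>_def by simp
    qed
    also have "\<dots> < 2 * \<epsilon> powr (1/4)"
    proof -
      have a: "0 < \<epsilon> powr (1/4)" using e0 by simp
      have "\<epsilon> powr (1/4) < 1 powr (1/4)" using e0 e1 by (intro powr_less_mono2) auto
      then have "\<epsilon> powr (1/4) < 1" by simp
      then have "(\<epsilon> powr (1/4))^2 < \<epsilon> powr (1/4)" using a by (simp add: power2_eq_square)
      then show ?thesis using a by linarith
    qed
    finally show ?thesis .
  qed
  define M where "M = id_blinfun - Rl"
  have cEM: "comm E M" unfolding M_def by (intro comm_diff comm_id comm_sym[OF cRlE])
  have cFM: "comm F M" unfolding M_def by (intro comm_diff comm_id comm_sym[OF cRlF])
  have Mpos: "0 \<le> inner (M w) w" for w
  proof -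
    have "inner (Rl w) w \<le> norm Rl * (norm w)^2" by (rule inner_le_norm)
    also have "\<dots> \<le> (norm w)^2" using nRl by (simp add: mult_left_le_one_le)
    finally show ?thesis unfolding M_def by (simp add: inner_diff_left power2_norm_eq_inner)
  qed
  have Mdec: "inner (M z) z = inner (M (E z)) (E z) + inner (M (F z)) (F z)" for z
  proof -
    have ez: "E z + F z = z" unfolding E_def by simp
    have "M (E z) = E (M (E z))" using comm_app[OF cEM, of "E z"] EE
      by (metis blinfun_apply_blinfun_compose)
    have a: "inner (M (E z)) (F z) = 0"
    proof -
      have "inner (M (E z)) (F z) = inner (F z) (M (E z))" by (rule inner_commute)
      also have "\<dots> = inner z (F (M (E z)))" by (rule symopD[OF sF])
      also have "F (M (E z)) = M (F (E z))" using comm_app[OF cFM] by simp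
      also have "F (E z) = 0"
      proof -
        have "(F o\<^sub>L E) z = 0" unfolding E_def using FF by (simp add: cmp_diff_r)
        then show ?thesis by simp
      qed
      finally show ?thesis by simp
    qed
    have b: "inner (M (F z)) (E z) = 0"
    proof -
      have "inner (M (F z)) (E z) = inner (E z) (M (F z))" by (rule inner_commute)
      also have "\<dots> = inner z (E (M (F z)))" by (rule symopD[OF sE])
      also have "E (M (F z)) = M (E (F z))" using comm_app[OF cEM] by simp
      also have "E (F z) = 0"
      proof -
        have "(E o\<^sub>L F) z = 0" using EF by simp
        then show ?thesis by simp
      qed
      finally show ?thesis by simp
    qed
    have "inner (M z) z = inner (M (E z + F z)) (E z + F z)" using ez by simp
    also have "\<dots> = inner (M (E z)) (E z) + inner (M (F z)) (F z)"
      using a b by (simp add: blinfun.add_right inner_add_left inner_add_right)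
    finally show ?thesis .
  qed
  have ME: "(1 - \<delta>) * (norm (E z))^2 \<le> inner (M (E z)) (E z)" for z
  proof -
    have "E (E z) = E z" using EE by (metis blinfun_apply_blinfun_compose)
    then have "inner (Rl (E z)) (E z) \<le> \<delta> * (norm (E z))^2" by (rule K1)
    then show ?thesis unfolding M_def by (simp add: inner_diff_left power2_norm_eq_inner algebra_simps)
  qed
  define \<kappa> where "\<kappa> = \<delta> / (1 - \<delta>)"
  have d2: "0 < 1 - \<delta>" using d1 by simp
  have kappa0: "0 \<le> \<kappa>" unfolding \<kappa>_def using d0 d2 by simp
  have Tb: "inner (T m y) y \<le> \<kappa> * (norm y)^2" if Ey: "E y = y" for m y
  proof -
    define z where "z = (id_blinfun + T m) y"
    have Xz: "Xi m z = y" unfolding z_def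
    proof -
      have "(Xi m o\<^sub>L (id_blinfun + T m)) y = y" using i2[of m] by simp
      then show "Xi m ((id_blinfun + T m) y) = y" by simp
    qed
    define q where "q = inner y z"
    have q1: "q = (norm y)^2 + inner (T m y) y" unfolding q_def z_def
      by (simp add: inner_add_right power2_norm_eq_inner inner_commute)
    have "inner (M z) z \<le> inner (Xi m z) z"
    proof -
      have "inner (R m z) z \<le> inner (Rl z) z" using RRl[of m] unfolding ople_def by blast
      then show ?thesis unfolding M_def R_def by (simp add: inner_diff_left)
    qed
    then have q2: "(1 - \<delta>) * (norm (E z))^2 \<le> q"
      using Mdec[of z] Mpos[of "F z"] ME[of z] Xz unfolding q_def by (simp add: inner_commute)
    have "q = inner (E y) z" unfolding q_def using Ey by simp
    also have "\<dots> = inner y (E z)" by (rule symopD[OF sE])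
    also have "\<dots> \<le> norm y * norm (E z)" by (rule norm_cauchy_schwarz)
    finally have q3: "q \<le> norm y * norm (E z)" .
    have q4: "(1 - \<delta>) * q \<le> (norm y)^2"
    proof (cases "norm (E z) = 0")
      case True
      then have "q \<le> 0" using q3 by simp
      then have "(1 - \<delta>) * q \<le> 0" using d2 by (simp add: mult_nonneg_nonpos)
      also have "0 \<le> (norm y)^2" by simp
      finally show ?thesis .
    next
      case False
      then have a0: "0 < norm (E z)" by simp
      have "(1 - \<delta>) * norm (E z) * norm (E z) \<le> norm y * norm (E z)"
        using q2 q3 by (simp add: power2_eq_square mult.assoc)
      then have a1: "(1 - \<delta>) * norm (E z) \<le> norm y" using a0 by (rule mult_right_le_imp_le)
      have "(1 - \<delta>) * q \<le> (1 - \<delta>) * (norm y * norm (E z))" using q3 d2 by (simp add: mult_left_mono)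
      also have "\<dots> = norm y * ((1 - \<delta>) * norm (E z))" by simp
      also have "\<dots> \<le> norm y * norm y" using a1 by (simp add: mult_left_mono)
      finally show ?thesis by (simp add: power2_eq_square)
    qed
    have "(1 - \<delta>) * inner (T m y) y \<le> \<delta> * (norm y)^2" using q4 q1 by (simp add: algebra_simps)
    then have "inner (T m y) y \<le> \<delta> * (norm y)^2 / (1 - \<delta>)" using d2 by (simp add: le_divide_eq mult.commute)
    then show ?thesis unfolding \<kappa>_def by simp
  qed
  have nE: "norm (E x) \<le> norm x" for x
  proof -
    have "(norm (E x))^2 = inner (E (E x)) x" using symopD[OF sE, of "E x" x] by (simp add: power2_norm_eq_inner)
    also have "E (E x) = E x" using EE by (metis blinfun_apply_blinfun_compose)
    also have "inner (E x) x \<le> norm (E x) * norm x" by (rule norm_cauchy_schwarz)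
    finally have "norm (E x) * norm (E x) \<le> norm (E x) * norm x" by (simp add: power2_eq_square)
    then show ?thesis by (cases "norm (E x) = 0") (simp_all add: mult_le_cancel_left_pos)
  qed
  have Qb: "norm (E o\<^sub>L T m o\<^sub>L E) < 4 * sqrt \<epsilon>" for m
  proof -
    have pQ: "posop (E o\<^sub>L T m o\<^sub>L E)" by (rule posop_conj[OF sE pT])
    have "norm (E o\<^sub>L T m o\<^sub>L E) \<le> \<kappa>"
    proof (rule posop_norm_le[OF pQ kappa0])
      fix x
      have "inner ((E o\<^sub>L T m o\<^sub>L E) x) x = inner (T m (E x)) (E x)" using symopD[OF sE] by simp
      also have "\<dots> \<le> \<kappa> * (norm (E x))^2"
      proof (rule Tb)
        show "E (E x) = E x" using EE by (metis blinfun_apply_blinfun_compose)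
      qed
      also have "\<dots> \<le> \<kappa> * (norm x)^2" using nE[of x] kappa0 by (simp add: mult_left_mono power_mono)
      finally show "inner ((E o\<^sub>L T m o\<^sub>L E) x) x \<le> \<kappa> * (norm x)^2" .
    qed
    also have "\<kappa> < 4 * \<delta>"
    proof -
      have "\<delta> < 4 * \<delta> * (1 - \<delta>)" using d0 d1 by (simp add: algebra_simps)
      then show ?thesis unfolding \<kappa>_def using d2 by (simp add: divide_less_eq)
    qed
    finally show ?thesis unfolding \<delta>_def .
  qed
  show ?thesis
  proof (intro bexI[of _ E] conjI allI impI)
    show "E \<in> A" by (rule EA)
    show "is_projection E" unfolding is_projection_def by (rule EE)
    show "\<rho> (id_blinfun - E) < 2 * \<epsilon> powr (1/4)" by (rule rE)
    fix m :: nat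
    show "norm (E o\<^sub>L (\<Sum>k=1..m. D k) o\<^sub>L E) < 4 * sqrt \<epsilon>" using Qb[of m] unfolding T_def .
  qed
qed

end

theorem lemma3p4:
  fixes J :: "'h::{real_inner,complete_space} \<Rightarrow>\<^sub>L 'h"
    and A :: "('h \<Rightarrow>\<^sub>L 'h) set"
    and \<rho> :: "('h \<Rightarrow>\<^sub>L 'h) \<Rightarrow> real"
    and \<epsilon> :: real
    and D :: "nat \<Rightarrow> ('h \<Rightarrow>\<^sub>L 'h)"
  assumes "JW_algebra J A" and "reversible A"
    and "is_state J A \<rho>" and "faithful_state J A \<rho>" and "normal_state J A \<rho>"
    and "0 < \<epsilon>" and "\<epsilon> < 1/16"
    and "\<forall>m\<ge>1. D m \<in> pos_part J A"
    and "summable (\<lambda>m. \<rho> (D (Suc m)))"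
    and "(\<Sum>m. \<rho> (D (Suc m))) < \<epsilon>"
  shows "\<exists>E\<in>A. is_projection E \<and> \<rho> (id_blinfun - E) < 2 * \<epsilon> powr (1/4) \<and>
           (\<forall>m\<ge>1. norm (E o\<^sub>L (\<Sum>k=1..m. D k) o\<^sub>L E) < 4 * sqrt \<epsilon>)"
proof -
  interpret jwr J A \<rho> by unfold_locales (fact assms(1), fact assms(3))
  show ?thesis by (rule main[OF assms(5-10)])
qed

end
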